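(* Let $s,\tilde s\in\mathbb{R}$, $0<p<\infty$ and $0<q,r\le\infty$. (1) If $s<\tilde s$ and $\frac sn+\frac1q=\frac{\tilde s}n+\frac1p$, then $L^{p,r}_{\tilde s}(\mathbb{R}^n)\hookrightarrow\dot K^s_{q,r}(\mathbb{R}^n)$, i.e. $\|f\|_{\dot K^s_{q,r}}\lesssim\|f\|_{L^{p,r}_{\tilde s}}$ for all $f\in L^{p,r}_{\tilde s}(\mathbb{R}^n)$. (2) If $s>\tilde s$ and $\frac sn+\frac1q=\frac{\tilde s}n+\frac1p$, then $\dot K^s_{q,r}(\mathbb{R}^n)\hookrightarrow L^{p,r}_{\tilde s}(\mathbb{R}^n)$, i.e. $\|f\|_{L^{p,r}_{\tilde s}}\lesssim\|f\|_{\dot K^s_{q,r}}$ for all $f\in\dot K^s_{q,r}(\mathbb{R}^n)$.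
   Context: For $j\in\mathbb{Z}$ let $A_j=\{x\in\mathbb{R}^n: 2^{j-1}\le|x|<2^j\}$. For $s\in\mathbb{R}$ and $0<q,r\le\infty$, the homogeneous Herz space $\dot K^s_{q,r}(\mathbb{R}^n)$ is the space of measurable $f$ with finite quasi-norm $\|f\|_{\dot K^s_{q,r}}=\big(\sum_{j\in\mathbb{Z}}[2^{js}\|f\chi_{A_j}\|_{L^q}]^r\big)^{1/r}$ for $r<\infty$, and $\sup_{j}2^{js}\|f\chi_{A_j}\|_{L^q}$ for $r=\infty$. For $0<p<\infty$, $0<r\le\infty$, the Lorentz space $L^{p,r}(\mathbb{R}^n)$ has quasi-norm $\|f\|_{L^{p,r}}=\big(\int_0^\infty[t^{1/p}f^*(t)]^r\,\frac{dt}t\big)^{1/r}$ (supremum of $t^{1/p}f^*(t)$ if $r=\infty$), where $f^*(t)=\inf\{\lambda>0: |\{x:|f(x)|>\lambda\}|\le t\}$ is the decreasing rearrangement; the weighted Lorentz space $L^{p,r}_{\tilde s}(\mathbb{R}^n)$ has quasi-norm $\|f\|_{L^{p,r}_{\tilde s}}=\||\cdot|^{\tilde s}f\|_{L^{p,r}}$. *)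

theory Defs
  imports "HOL-Analysis.Analysis"
begin

text \<open>Power of an extended nonnegative real with positive real exponent
  (used only with exponent > 0): \<open>\<infinity> ^ a = \<infinity>\<close>.\<close>
definition epow :: "ennreal \<Rightarrow> real \<Rightarrow> ennreal" where
  "epow x a = (if x = \<infinity> then \<infinity> else ennreal (enn2real x powr a))"

text \<open>Reciprocal of an exponent in (0,\<infinity>]; 1/\<infinity> = 0.\<close>
definition recip :: "ennreal \<Rightarrow> real" where
  "recip q = enn2real (inverse q)"

definition Lq_norm :: "ennreal \<Rightarrow> ('a::euclidean_space \<Rightarrow> real) \<Rightarrow> ennreal" where
  "Lq_norm q f = (if q = \<infinity>
      then Inf {C. AE x in lebesgue. ennreal \<bar>f x\<bar> \<le> C}
      else epow (\<integral>\<^sup>+ x. ennreal (\<bar>f x\<bar> powr enn2real q) \<partial>lebesgue) (1 / enn2real q))"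

definition annulus :: "int \<Rightarrow> 'a::euclidean_space set" where
  "annulus j = {x. 2 powr (real_of_int j - 1) \<le> norm x \<and> norm x < 2 powr real_of_int j}"

definition herz_norm :: "real \<Rightarrow> ennreal \<Rightarrow> ennreal \<Rightarrow> ('a::euclidean_space \<Rightarrow> real) \<Rightarrow> ennreal" where
  "herz_norm s q r f =
     (let a = (\<lambda>j::int. ennreal (2 powr (real_of_int j * s)) *
                        Lq_norm q (\<lambda>x. f x * indicator (annulus j) x))
      in if r = \<infinity> then (SUP j. a j)
         else epow (\<integral>\<^sup>+ j. epow (a j) (enn2real r) \<partial>count_space UNIV) (1 / enn2real r))"

text \<open>Decreasing rearrangement f^*(t) = inf{\<lambda> > 0. |{|f| > \<lambda>}| \<le> t} (inf \<emptyset> = \<infinity>).\<close>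
definition rearr :: "('a::euclidean_space \<Rightarrow> real) \<Rightarrow> real \<Rightarrow> ennreal" where
  "rearr f t = Inf {c::ennreal. 0 < c \<and>
       emeasure lebesgue {x. c < ennreal \<bar>f x\<bar>} \<le> ennreal t}"

definition lorentz_norm :: "real \<Rightarrow> ennreal \<Rightarrow> ('a::euclidean_space \<Rightarrow> real) \<Rightarrow> ennreal" where
  "lorentz_norm p r f = (if r = \<infinity>
      then (SUP t\<in>{0<..}. ennreal (t powr (1/p)) * rearr f t)
      else epow (\<integral>\<^sup>+ t\<in>{0<..}. epow (ennreal (t powr (1/p)) * rearr f t) (enn2real r)
                    * ennreal (1 / t) \<partial>lborel) (1 / enn2real r))"

definition wlorentz_norm :: "real \<Rightarrow> ennreal \<Rightarrow> real \<Rightarrow> ('a::euclidean_space \<Rightarrow> real) \<Rightarrow> ennreal" where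
  "wlorentz_norm p r s f = lorentz_norm p r (\<lambda>x. norm x powr s * f x)"

end

theory Submission
  imports Defs
begin

lemma epow_top[simp]: "epow top a = top"
  by (simp add: epow_def)

lemma epow_ennreal: "0 \<le> c \<Longrightarrow> epow (ennreal c) a = ennreal (c powr a)"
  by (simp add: epow_def)

lemma epow_0[simp]: "epow 0 a = 0"
  by (simp add: epow_def)

lemma epow_mono:
  assumes "0 < a" "x \<le> y" shows "epow x a \<le> epow y a"
proof (cases "y = top")
  case True then show ?thesis by simp
next
  case False
  then obtain v where v: "y = ennreal v" "0 \<le> v" by (cases y rule: ennreal_cases) auto
  with assms obtain u where u: "x = ennreal u" "0 \<le> u" "u \<le> v"
    by (cases x rule: ennreal_cases) (auto simp: top_unique)
  then show ?thesis using v assms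
    by (simp add: epow_ennreal powr_mono2)
qed

lemma epow_mult:
  assumes "0 < a" shows "epow (x * y) a = epow x a * epow y a"
proof (cases x rule: ennreal_cases)
  case (real u)
  then show ?thesis
  proof (cases y rule: ennreal_cases)
    case (real v)
    then show ?thesis using \<open>x = ennreal u\<close> \<open>0 \<le> u\<close>
      by (simp add: epow_ennreal ennreal_mult[symmetric] powr_mult)
  next
    case top
    then show ?thesis using \<open>x = ennreal u\<close> \<open>0 \<le> u\<close> assms
      by (cases "u = 0") (auto simp: epow_ennreal ennreal_mult_top ennreal_top_mult)
  qed
next
  case top
  then show ?thesis
  proof (cases y rule: ennreal_cases)
    case (real v)
    then show ?thesis using \<open>x = top\<close> assms
      by (cases "v = 0") (auto simp: epow_ennreal ennreal_mult_top ennreal_top_mult)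
  qed simp
qed

lemma epow_epow:
  assumes "0 < a" "0 < b" shows "epow (epow x a) b = epow x (a * b)"
  by (cases x rule: ennreal_cases) (auto simp: epow_ennreal powr_powr)

lemma epow_1[simp]: "epow x 1 = x"
  by (cases x rule: ennreal_cases) (auto simp: epow_ennreal)

lemma epow_inv: "0 < a \<Longrightarrow> epow (epow x a) (1/a) = x"
  by (simp add: epow_epow)

lemma epow_inv': "0 < a \<Longrightarrow> epow (epow x (1/a)) a = x"
  by (simp add: epow_epow)

lemma epow_le_iff:
  assumes "0 < a" shows "epow x a \<le> epow y a \<longleftrightarrow> x \<le> y"
  using epow_mono[OF assms] epow_mono[of "1/a" "epow x a" "epow y a"] assms
  by (auto simp: epow_inv)

lemma epow_cmult:
  assumes "0 < a" "0 \<le> c" shows "epow (ennreal c * x) a = ennreal (c powr a) * epow x a"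
  using assms by (simp add: epow_mult epow_ennreal)

lemma ennreal_le_suminf: "(f i :: ennreal) \<le> (\<Sum>i. f i)"
  using sum_le_suminf[OF summableI, of "{i}" f] by simp

definition Lr :: "ennreal \<Rightarrow> (int \<Rightarrow> ennreal) \<Rightarrow> ennreal" where
  "Lr r a = (if r = \<infinity> then (SUP j. a j)
     else epow (\<integral>\<^sup>+ j. epow (a j) (enn2real r) \<partial>count_space UNIV) (1 / enn2real r))"

lemma herz_norm_Lr:
  "herz_norm s q r f = Lr r (\<lambda>j. ennreal (2 powr (real_of_int j * s)) *
                        Lq_norm q (\<lambda>x. f x * indicator (annulus j) x))"
  by (simp add: herz_norm_def Lr_def Let_def)

lemma ennreal_theta_le: "0 \<le> \<theta> \<Longrightarrow> \<theta> \<le> 1 \<Longrightarrow> ennreal (\<theta>^i) * x \<le> x"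
proof -
  assume "0 \<le> \<theta>" "\<theta> \<le> 1"
  then have "ennreal (\<theta>^i) \<le> 1" by (simp add: power_le_one)
  then show ?thesis using mult_right_mono[of "ennreal (\<theta>^i)" 1 x] by simp
qed

lemma Lr_conv:
  fixes \<sigma> :: "int \<Rightarrow> nat \<Rightarrow> int"
  assumes r: "0 < r" and th: "0 \<le> \<theta>" "\<theta> < 1" and K: "0 \<le> K"
    and \<sigma>: "\<And>i. bij (\<lambda>j. \<sigma> j i)"
  shows "\<exists>C>0. \<forall>b c. (\<forall>j D. (\<forall>i. ennreal (\<theta>^i) * c (\<sigma> j i) \<le> D) \<longrightarrow> b j \<le> ennreal K * D)
            \<longrightarrow> Lr r b \<le> ennreal C * Lr r c"
proof (cases "r = \<infinity>")
  case True
  show ?thesis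
  proof (intro exI[of _ "K+1"] conjI allI impI)
    show "0 < K + 1" using K by simp
    fix b c :: "int \<Rightarrow> ennreal"
    assume h: "\<forall>j D. (\<forall>i. ennreal (\<theta>^i) * c (\<sigma> j i) \<le> D) \<longrightarrow> b j \<le> ennreal K * D"
    have "b j \<le> ennreal K * (SUP k. c k)" for j
    proof -
      have "ennreal (\<theta>^i) * c (\<sigma> j i) \<le> (SUP k. c k)" for i
        using ennreal_theta_le[of \<theta> i "c (\<sigma> j i)"] th
        by (meson SUP_upper UNIV_I less_imp_le order_trans)
      then show ?thesis using h by blast
    qed
    also have "ennreal K * (SUP k. c k) \<le> ennreal (K+1) * (SUP k. c k)"
      by (intro mult_right_mono) (auto simp: K)
    finally show "Lr r b \<le> ennreal (K + 1) * Lr r c"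
      using True by (simp add: Lr_def SUP_le_iff)
  qed
next
  case False
  define \<rho> where "\<rho> = enn2real r"
  have \<rho>: "0 < \<rho>" using r False by (simp add: \<rho>_def enn2real_positive_iff less_top)
  define t where "t = \<theta> powr \<rho>"
  have t: "0 \<le> t" "t < 1" using th \<rho> powr_less_mono2[of \<rho> \<theta> 1] by (auto simp: t_def)
  define Z where "Z = 1 / (1 - t)"
  have Z: "0 < Z" using t by (simp add: Z_def)
  have geo: "(\<Sum>i. ennreal (t^i)) = ennreal Z"
    using t by (subst suminf_ennreal2) (auto simp: Z_def suminf_geometric summable_geometric)
  show ?thesis
  proof (intro exI[of _ "K * Z powr (1/\<rho>) + 1"] conjI allI impI)
    show "0 < K * Z powr (1/\<rho>) + 1" using K Z by (simp add: add_nonneg_pos)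
    fix b c :: "int \<Rightarrow> ennreal"
    assume h: "\<forall>j D. (\<forall>i. ennreal (\<theta>^i) * c (\<sigma> j i) \<le> D) \<longrightarrow> b j \<le> ennreal K * D"
    define S where "S j = (\<Sum>i. ennreal (t^i) * epow (c (\<sigma> j i)) \<rho>)" for j
    define T where "T = (\<integral>\<^sup>+ j. epow (c j) \<rho> \<partial>count_space UNIV)"
    have bj: "epow (b j) \<rho> \<le> ennreal (K powr \<rho>) * S j" for j
    proof -
      have "ennreal (\<theta>^i) * c (\<sigma> j i) \<le> epow (S j) (1/\<rho>)" for i
      proof -
        have "epow (ennreal (\<theta>^i) * c (\<sigma> j i)) \<rho> = ennreal (t^i) * epow (c (\<sigma> j i)) \<rho>"
        proof -
          have "(\<theta>^i) powr \<rho> = (\<theta> powr \<rho>)^i"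
            using th by (induction i) (auto simp: powr_mult)
          then show ?thesis using th \<rho> by (simp add: epow_cmult t_def)
        qed
        also have "\<dots> \<le> S j" unfolding S_def by (rule ennreal_le_suminf)
        finally show ?thesis using \<rho> epow_mono[of "1/\<rho>"] epow_inv by (metis divide_pos_pos zero_less_one)
      qed
      then have "b j \<le> ennreal K * epow (S j) (1/\<rho>)" using h by blast
      then have "epow (b j) \<rho> \<le> epow (ennreal K * epow (S j) (1/\<rho>)) \<rho>"
        using \<rho> by (rule epow_mono[rotated])
      also have "\<dots> = ennreal (K powr \<rho>) * S j"
        using \<rho> K by (simp add: epow_cmult epow_inv')
      finally show ?thesis .
    qed
    have "(\<integral>\<^sup>+ j. epow (b j) \<rho> \<partial>count_space UNIV) \<le> (\<integral>\<^sup>+ j. ennreal (K powr \<rho>) * S j \<partial>count_space UNIV)"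
      by (intro nn_integral_mono bj)
    also have "\<dots> = ennreal (K powr \<rho>) * (\<integral>\<^sup>+ j. S j \<partial>count_space UNIV)"
      by (simp add: nn_integral_cmult)
    also have "(\<integral>\<^sup>+ j. S j \<partial>count_space UNIV) = (\<Sum>i. \<integral>\<^sup>+ j. ennreal (t^i) * epow (c (\<sigma> j i)) \<rho> \<partial>count_space UNIV)"
      unfolding S_def by (rule nn_integral_suminf) simp
    also have "\<dots> = (\<Sum>i. ennreal (t^i) * T)"
    proof (rule suminf_cong)
      fix i
      have "(\<integral>\<^sup>+ j. epow (c (\<sigma> j i)) \<rho> \<partial>count_space UNIV) = T"
        unfolding T_def by (rule nn_integral_bij_count_space) (use \<sigma> in simp)
      then show "(\<integral>\<^sup>+ j. ennreal (t^i) * epow (c (\<sigma> j i)) \<rho> \<partial>count_space UNIV) = ennreal (t^i) * T"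
        by (simp add: nn_integral_cmult)
    qed
    also have "\<dots> = ennreal Z * T" using geo by simp
    finally have I: "(\<integral>\<^sup>+ j. epow (b j) \<rho> \<partial>count_space UNIV) \<le> ennreal (K powr \<rho>) * (ennreal Z * T)" .
    have "Lr r b \<le> epow (ennreal (K powr \<rho>) * (ennreal Z * T)) (1/\<rho>)"
      using False I \<rho> by (simp add: Lr_def \<rho>_def[symmetric] epow_mono)
    also have "\<dots> = ennreal (K * Z powr (1/\<rho>)) * Lr r c"
      using False \<rho> K Z by (simp add: Lr_def \<rho>_def[symmetric] T_def epow_cmult powr_powr
           ennreal_mult' mult.assoc)
    also have "\<dots> \<le> ennreal (K * Z powr (1/\<rho>) + 1) * Lr r c"
      by (intro mult_right_mono ennreal_leI) auto
    finally show "Lr r b \<le> ennreal (K * Z powr (1/\<rho>) + 1) * Lr r c" .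
  qed
qed

lemma annulus_borel[measurable]: "annulus j \<in> sets borel"
  unfolding annulus_def by measurable

lemma annulus_lebesgue[measurable]: "annulus j \<in> sets lebesgue"
  using annulus_borel by (metis sets_completionI_sets sets_lborel)

lemma emeasure_lebesgue_borel: "S \<in> sets borel \<Longrightarrow> emeasure lebesgue S = emeasure lborel S"
  by simp

lemma ball_measure:
  assumes "0 < R"
  shows "emeasure lebesgue {x::'a::euclidean_space. norm x < R} \<le> ennreal ((2*R)^DIM('a))"
proof -
  have sub: "{x::'a. norm x < R} \<subseteq> cbox (-(R *\<^sub>R One)) (R *\<^sub>R One)"
  proof
    fix x :: 'a assume "x \<in> {x. norm x < R}"
    then have "\<bar>x \<bullet> b\<bar> \<le> R" if "b \<in> Basis" for b
      using Basis_le_norm[OF that, of x] by simp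
    then show "x \<in> cbox (-(R *\<^sub>R One)) (R *\<^sub>R One)"
      by (force simp: mem_box abs_le_iff inner_minus_left)
  qed
  have "emeasure lebesgue {x::'a. norm x < R} \<le> emeasure lebesgue (cbox (-(R *\<^sub>R One)) (R *\<^sub>R One) :: 'a set)"
    by (intro emeasure_mono sub) simp
  also have "\<dots> = emeasure lborel (cbox (-(R *\<^sub>R One)) (R *\<^sub>R One) :: 'a set)"
    by simp
  also have "\<dots> = ennreal ((2*R)^DIM('a))"
  proof -
    have "(\<Prod>b\<in>(Basis::'a set). (R *\<^sub>R One - (-(R *\<^sub>R One))) \<bullet> b) = (\<Prod>b\<in>(Basis::'a set). 2*R)"
      by (rule prod.cong[OF refl]) (auto simp: inner_diff_left inner_add_left)
    then show ?thesis using assms by (simp add: emeasure_lborel_cbox_eq inner_diff_left)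
  qed
  finally show ?thesis .
qed

definition dy :: "nat \<Rightarrow> int \<Rightarrow> real" where
  "dy n k = 2 powr (real n * (real_of_int k + 1))"

lemma dy_pos: "0 < dy n k" by (simp add: dy_def)

lemma dy_mono: "k \<le> l \<Longrightarrow> dy n k \<le> dy n l"
  by (simp add: dy_def mult_left_mono)

lemma dy_succ: "dy n (k + 1) = 2 powr real n * dy n k"
  by (simp add: dy_def powr_add[symmetric] algebra_simps)

lemma ball_measure_pow:
  "emeasure lebesgue {x::'a::euclidean_space. norm x < 2 powr real_of_int k} \<le> ennreal (dy DIM('a) k)"
proof -
  have "(2 * 2 powr real_of_int k) ^ DIM('a) = dy DIM('a) k"
    by (simp add: dy_def powr_realpow[symmetric] powr_powr powr_add[symmetric] algebra_simps)
  then show ?thesis using ball_measure[of "2 powr real_of_int k", where 'a='a] by simp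
qed

lemma annulus_subset: "annulus j \<subseteq> {x. norm x < 2 powr real_of_int j}"
  by (auto simp: annulus_def)

lemma annulus_measure: "emeasure lebesgue (annulus j :: 'a::euclidean_space set) \<le> ennreal (dy DIM('a) j)"
  by (rule order_trans[OF emeasure_mono[OF annulus_subset] ball_measure_pow]) simp

lemma annulus_nonzero: "x \<in> annulus j \<Longrightarrow> x \<noteq> 0"
  by (auto simp: annulus_def)

lemma mem_annulus:
  assumes "x \<noteq> 0" shows "x \<in> annulus (\<lfloor>log 2 (norm x)\<rfloor> + 1)"
proof -
  let ?l = "log 2 (norm x)"
  have n: "0 < norm x" using assms by simp
  have "2 powr real_of_int \<lfloor>?l\<rfloor> \<le> 2 powr ?l" by simp
  moreover have "2 powr ?l < 2 powr (real_of_int \<lfloor>?l\<rfloor> + 1)"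
    by (simp add: real_of_int_floor_add_one_gt)
  moreover have "2 powr ?l = norm x" using n by simp
  ultimately show ?thesis unfolding annulus_def by simp
qed

lemma annulus_norm_powr_le:
  assumes "x \<in> annulus j"
  shows "norm x powr a \<le> max 1 (2 powr (-a)) * 2 powr (real_of_int j * a)"
proof (cases "0 \<le> a")
  case True
  have "norm x powr a \<le> (2 powr real_of_int j) powr a"
    using assms True by (intro powr_mono2) (auto simp: annulus_def)
  also have "\<dots> \<le> max 1 (2 powr (-a)) * 2 powr (real_of_int j * a)"
    by (simp add: powr_powr mult_right_mono)
  finally show ?thesis .
next
  case False
  have "norm x powr a \<le> (2 powr (real_of_int j - 1)) powr a"
    using assms False by (intro powr_mono2') (auto simp: annulus_def)
  also have "\<dots> = 2 powr (-a) * 2 powr (real_of_int j * a)"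
    by (simp add: powr_powr powr_add[symmetric] algebra_simps)
  also have "\<dots> \<le> max 1 (2 powr (-a)) * 2 powr (real_of_int j * a)"
    by (simp add: mult_right_mono)
  finally show ?thesis .
qed

lemma lebesgue_set_less:
  fixes h :: "'a::euclidean_space \<Rightarrow> real"
  assumes [measurable]: "h \<in> borel_measurable lebesgue"
  shows "{x. c < h x} \<in> sets lebesgue"
proof -
  have "{x \<in> space lebesgue. c < h x} \<in> sets lebesgue" by measurable
  then show ?thesis by simp
qed

lemma lebesgue_set_less_enn:
  fixes h :: "'a::euclidean_space \<Rightarrow> ennreal"
  assumes [measurable]: "h \<in> borel_measurable lebesgue"
  shows "{x. c < h x} \<in> sets lebesgue"
proof -
  have "{x \<in> space lebesgue. c < h x} \<in> sets lebesgue" by measurable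
  then show ?thesis by simp
qed

lemma rearr_antimono:
  assumes "t1 \<le> t2" shows "rearr g t2 \<le> rearr g t1"
  unfolding rearr_def
proof (rule Inf_superset_mono, safe)
  fix c assume "0 < c" "emeasure lebesgue {x. c < ennreal \<bar>g x\<bar>} \<le> ennreal t1"
  then show "emeasure lebesgue {x. c < ennreal \<bar>g x\<bar>} \<le> ennreal t2"
    using assms by (meson ennreal_leI order_trans)
qed

lemma rearr_upper:
  assumes "0 \<le> lam" "\<And>l. lam < l \<Longrightarrow> emeasure lebesgue {x. ennreal l < ennreal \<bar>g x\<bar>} \<le> ennreal t"
  shows "rearr g t \<le> ennreal lam"
proof (rule ennreal_le_epsilon)
  fix e :: real assume "0 < e"
  have m: "emeasure lebesgue {x. ennreal (lam + e) < ennreal \<bar>g x\<bar>} \<le> ennreal t"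
    by (rule assms(2)) (use \<open>0 < e\<close> in simp)
  have "rearr g t \<le> ennreal (lam + e)"
    unfolding rearr_def
  proof (rule Inf_lower, rule CollectI, rule conjI)
    show "0 < ennreal (lam + e)" using assms \<open>0 < e\<close> by (simp del: ennreal_plus)
  qed (rule m)
  then show "rearr g t \<le> ennreal lam + ennreal e"
    using assms \<open>0 < e\<close> by simp
qed

lemma rearr_level:
  assumes g[measurable]: "g \<in> borel_measurable lebesgue"
  shows "emeasure lebesgue {x. rearr g t < ennreal \<bar>g x\<bar>} \<le> ennreal t"
proof (cases "rearr g t = top")
  case True then show ?thesis by simp
next
  case False
  then obtain \<gamma> where \<gamma>: "rearr g t = ennreal \<gamma>" "0 \<le> \<gamma>" by (cases "rearr g t" rule: ennreal_cases) auto
  define B where "B n = {x. \<gamma> + 1 / Suc n < \<bar>g x\<bar>}" for n :: nat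
  have "B n \<in> sets lebesgue" for n unfolding B_def by (rule lebesgue_set_less) measurable
  then have B_meas: "range B \<subseteq> sets lebesgue" by auto
  have B_inc: "incseq B"
  proof (rule incseq_SucI)
    fix n
    have "1 / real (Suc (Suc n)) \<le> 1 / Suc n" by (simp add: frac_le)
    then show "B n \<subseteq> B (Suc n)" unfolding B_def by force
  qed
  have Bn: "emeasure lebesgue (B n) \<le> ennreal t" for n
  proof -
    have "rearr g t < ennreal (\<gamma> + 1 / Suc n)" unfolding \<gamma>(1)
    proof (rule ennreal_lessI)
      have "0 < 1 / real (Suc n)" by simp
      then show "0 < \<gamma> + 1 / real (Suc n)" using \<gamma> by linarith
    qed simp
    then obtain c where c: "c \<in> {c. 0 < c \<and> emeasure lebesgue {x. c < ennreal \<bar>g x\<bar>} \<le> ennreal t}"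
      "c < ennreal (\<gamma> + 1 / Suc n)"
      unfolding rearr_def Inf_less_iff by blast
    have "B n \<subseteq> {x. c < ennreal \<bar>g x\<bar>}"
    proof
      fix x assume "x \<in> B n"
      then have h: "\<gamma> + 1 / Suc n < \<bar>g x\<bar>" by (simp add: B_def)
      have pos: "0 < 1 / real (Suc n)" by simp
      have "ennreal (\<gamma> + 1 / Suc n) < ennreal \<bar>g x\<bar>"
        by (intro ennreal_lessI h) (use h pos \<gamma> in linarith)
      then show "x \<in> {x. c < ennreal \<bar>g x\<bar>}" using c(2) by (metis mem_Collect_eq order.strict_trans)
    qed
    then have "emeasure lebesgue (B n) \<le> emeasure lebesgue {x. c < ennreal \<bar>g x\<bar>}"
      by (intro emeasure_mono lebesgue_set_less_enn) auto
    then show ?thesis using c(1) by (blast intro: order_trans)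
  qed
  have U: "{x. rearr g t < ennreal \<bar>g x\<bar>} = (\<Union>n. B n)"
  proof safe
    fix x assume "rearr g t < ennreal \<bar>g x\<bar>"
    then have "\<gamma> < \<bar>g x\<bar>" using \<gamma> by (simp add: ennreal_less_iff)
    then have "0 < \<bar>g x\<bar> - \<gamma>" by simp
    from reals_Archimedean[OF this] obtain n where "inverse (real (Suc n)) < \<bar>g x\<bar> - \<gamma>" by blast
    then have "\<gamma> + 1 / Suc n < \<bar>g x\<bar>" by (simp add: inverse_eq_divide)
    then show "x \<in> (\<Union>n. B n)" by (auto simp: B_def)
  next
    fix x n assume "x \<in> B n"
    then have h: "\<gamma> + 1 / Suc n < \<bar>g x\<bar>" by (simp add: B_def)
    have pos: "0 < 1 / real (Suc n)" by simp
    have "ennreal \<gamma> < ennreal \<bar>g x\<bar>"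
      by (rule ennreal_lessI) (use h pos \<gamma> in linarith)+
    then show "rearr g t < ennreal \<bar>g x\<bar>" using \<gamma> by simp
  qed
  have "emeasure lebesgue (\<Union>n. B n) = (SUP n. emeasure lebesgue (B n))"
    using SUP_emeasure_incseq[OF B_meas B_inc] by simp
  also have "\<dots> \<le> ennreal t" by (rule SUP_least) (rule Bn)
  finally show ?thesis unfolding U .
qed

definition kt :: "nat \<Rightarrow> real \<Rightarrow> int" where
  "kt n t = \<lceil>log 2 t / real n\<rceil> - 1"

lemma dy_Ioc_iff:
  assumes "0 < n"
  shows "t \<in> {dy n (k-1)<..dy n k} \<longleftrightarrow> 0 < t \<and> k = kt n t"
proof (cases "0 < t")
  case False
  then show ?thesis using dy_pos[of n "k-1"] by auto
next
  case True
  have a: "dy n (k-1) < t \<longleftrightarrow> real n * real_of_int k < log 2 t"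
    using True by (simp add: dy_def powr_less_iff)
  have b: "t \<le> dy n k \<longleftrightarrow> log 2 t \<le> real n * (real_of_int k + 1)"
    using True by (simp add: dy_def le_powr_iff)
  have c: "k = kt n t \<longleftrightarrow> real_of_int k < log 2 t / real n \<and> log 2 t / real n \<le> real_of_int k + 1"
    unfolding kt_def using ceiling_eq_iff[of "log 2 t / real n" "k+1"] by auto
  show ?thesis using True assms
    by (simp only: greaterThanAtMost_iff a b c) (simp add: field_simps mult.commute)
qed

lemma step_sum_pointwise:
  assumes "0 < n"
  shows "(\<integral>\<^sup>+k. w k * indicator {dy n (k-1)<..dy n k} t \<partial>count_space UNIV)
         = (if 0 < t then w (kt n t) else 0)"
proof -
  have "(\<lambda>k. w k * indicator {dy n (k-1)<..dy n k} t) = (\<lambda>k. (if 0 < t then w (kt n t) else 0) * indicator {kt n t} k)"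
    using dy_Ioc_iff[OF assms] by (auto simp: fun_eq_iff split: split_indicator)
  then show ?thesis by simp
qed

lemma step_integral:
  assumes "0 < n"
  shows "(\<integral>\<^sup>+t. (if 0 < t then w (kt n t) else 0) \<partial>lborel)
         = (\<integral>\<^sup>+k. w k * ennreal (dy n k - dy n (k-1)) \<partial>count_space UNIV)"
proof -
  have "(\<integral>\<^sup>+t. (if 0 < t then w (kt n t) else 0) \<partial>lborel)
     = (\<integral>\<^sup>+t. (\<integral>\<^sup>+k. w k * indicator {dy n (k-1)<..dy n k} t \<partial>count_space UNIV) \<partial>lborel)"
    by (simp add: step_sum_pointwise[OF assms])
  also have "\<dots> = (\<integral>\<^sup>+k. (\<integral>\<^sup>+t. w k * indicator {dy n (k-1)<..dy n k} t \<partial>lborel) \<partial>count_space UNIV)"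
    by (rule nn_integral_count_space_nn_integral) auto
  also have "\<dots> = (\<integral>\<^sup>+k. w k * ennreal (dy n k - dy n (k-1)) \<partial>count_space UNIV)"
    using dy_mono[of "k-1" k n for k]
    by (intro nn_integral_cong) (simp add: nn_integral_cmult_indicator)
  finally show ?thesis .
qed

lemma step_lower:
  assumes "0 < n" "\<And>k t. t \<in> {dy n (k-1)<..dy n k} \<Longrightarrow> w k \<le> F t"
  shows "(\<integral>\<^sup>+k. w k * ennreal (dy n k - dy n (k-1)) \<partial>count_space UNIV) \<le> (\<integral>\<^sup>+t\<in>{0<..}. F t \<partial>lborel)"
  unfolding step_integral[OF assms(1), symmetric]
  using assms dy_Ioc_iff[OF assms(1)] by (intro nn_integral_mono) (auto split: split_indicator)

lemma step_upper:
  assumes "0 < n" "\<And>k t. t \<in> {dy n (k-1)<..dy n k} \<Longrightarrow> F t \<le> w k"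
  shows "(\<integral>\<^sup>+t\<in>{0<..}. F t \<partial>lborel) \<le> (\<integral>\<^sup>+k. w k * ennreal (dy n k - dy n (k-1)) \<partial>count_space UNIV)"
  unfolding step_integral[OF assms(1), symmetric]
  using assms dy_Ioc_iff[OF assms(1)] by (intro nn_integral_mono) (auto split: split_indicator)

definition dsamp :: "real \<Rightarrow> nat \<Rightarrow> ('a::euclidean_space \<Rightarrow> real) \<Rightarrow> int \<Rightarrow> ennreal" where
  "dsamp p n g k = ennreal (dy n k powr (1/p)) * rearr g (dy n k)"

lemma dy_prev: "dy n k = 2 powr real n * dy n (k - 1)"
  using dy_succ[of n "k-1"] by simp

lemma real_id_lower:
  fixes N a e :: real assumes "1 < N" "0 < a"
  shows "(N*a) powr e * ((N powr (-e) * (1 - 1/N)) / (N*a - a)) = a powr e * (1 / (N*a))"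
proof -
  have "(N*a) powr e = N powr e * a powr e" using assms by (simp add: powr_mult)
  moreover have "N powr e * N powr (-e) = 1" using assms by (simp add: powr_minus)
  moreover have "(1 - 1/N) / (N*a - a) = 1 / (N*a)" using assms by (simp add: field_simps)
  ultimately show ?thesis
    by (metis (no_types, lifting) mult.assoc mult.left_commute mult_1 times_divide_eq_right)
qed

lemma real_id_upper:
  fixes N a e :: real assumes "1 < N" "0 < a"
  shows "a powr e * ((N powr e * (N - 1)) / (N*a - a)) = (N*a) powr e * (1 / a)"
proof -
  have "(N*a) powr e = N powr e * a powr e" using assms by (simp add: powr_mult)
  moreover have "(N - 1) / (N*a - a) = 1 / a" using assms by (simp add: field_simps)
  ultimately show ?thesis
    by (metis (no_types, lifting) mult.assoc mult.left_commute times_divide_eq_right)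
qed

lemma ennreal_cancel_le:
  assumes "0 < c" "ennreal c * T \<le> L" shows "T \<le> ennreal (1/c) * L"
proof -
  have "T = ennreal (1/c) * (ennreal c * T)"
    using assms by (simp add: mult.assoc[symmetric] ennreal_mult[symmetric])
  also have "\<dots> \<le> ennreal (1/c) * L" by (intro mult_left_mono assms(2)) simp
  finally show ?thesis .
qed

lemma lorentz_pointwise_upper:
  assumes "0 < p" "dy n (k-1) < t" "t \<le> dy n k"
  shows "ennreal (t powr (1/p)) * rearr g t \<le> ennreal (dy n k powr (1/p)) * rearr g (dy n (k-1))"
proof (intro mult_mono)
  show "ennreal (t powr (1/p)) \<le> ennreal (dy n k powr (1/p))"
    using assms dy_pos[of n "k-1"] by (intro ennreal_leI powr_mono2) auto
  show "rearr g t \<le> rearr g (dy n (k-1))" using assms by (intro rearr_antimono) auto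
qed auto

lemma lorentz_pointwise_lower:
  assumes "0 < p" "dy n (k-1) < t" "t \<le> dy n k"
  shows "ennreal (dy n (k-1) powr (1/p)) * rearr g (dy n k) \<le> ennreal (t powr (1/p)) * rearr g t"
proof (intro mult_mono)
  show "ennreal (dy n (k-1) powr (1/p)) \<le> ennreal (t powr (1/p))"
    using assms dy_pos[of n "k-1"] by (intro ennreal_leI powr_mono2) auto
  show "rearr g (dy n k) \<le> rearr g t" using assms by (intro rearr_antimono) auto
qed auto

lemma lorentz_lower:
  assumes p: "0 < p" and r: "0 < r"
  shows "\<exists>C>0. \<forall>g::'a::euclidean_space \<Rightarrow> real. Lr r (dsamp p DIM('a) g) \<le> ennreal C * lorentz_norm p r g"
proof (cases "r = \<infinity>")
  case True
  show ?thesis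
  proof (intro exI[of _ 1] conjI allI)
    fix g :: "'a \<Rightarrow> real"
    have "dsamp p DIM('a) g k \<le> lorentz_norm p r g" for k
      using True dy_pos[of "DIM('a)" k] unfolding lorentz_norm_def dsamp_def
      by (auto intro!: SUP_upper)
    then show "Lr r (dsamp p DIM('a) g) \<le> ennreal 1 * lorentz_norm p r g"
      using True by (simp add: Lr_def SUP_le_iff)
  qed simp
next
  case False
  define n where "n = DIM('a)"
  have n: "0 < n" by (simp add: n_def)
  define N where "N = (2::real) powr real n"
  have N: "1 < N" using n by (simp add: N_def)
  define \<rho> where "\<rho> = enn2real r"
  have \<rho>: "0 < \<rho>" using r False by (simp add: \<rho>_def enn2real_positive_iff less_top)
  define c0 where "c0 = N powr (-(\<rho>/p)) * (1 - 1/N)"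
  have c0: "0 < c0" using N by (simp add: c0_def)
  show ?thesis
  proof (intro exI[of _ "(1/c0) powr (1/\<rho>)"] conjI allI)
    show "0 < (1/c0) powr (1/\<rho>)" using c0 by simp
    fix g :: "'a \<Rightarrow> real"
    define G where "G = rearr g"
    define F where "F t = epow (ennreal (t powr (1/p)) * G t) \<rho> * ennreal (1/t)" for t
    define w where "w k = epow (dsamp p n g k) \<rho> * ennreal (c0 / (dy n k - dy n (k-1)))" for k
    define T where "T = (\<integral>\<^sup>+ k. epow (dsamp p n g k) \<rho> \<partial>count_space UNIV)"
    define L where "L = (\<integral>\<^sup>+ t\<in>{0<..}. F t \<partial>lborel)"
    have Dk: "dy n k = N * dy n (k-1)" for k using dy_prev[of n k] by (simp add: N_def)
    have wF: "w k \<le> F t" if t: "t \<in> {dy n (k-1)<..dy n k}" for k t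
    proof -
      let ?a = "dy n (k-1)"
      have a: "0 < ?a" by (rule dy_pos)
      have "w k = ennreal (dy n k powr (\<rho>/p)) * epow (G (dy n k)) \<rho> * ennreal (c0 / (dy n k - ?a))"
        using p \<rho> by (simp add: w_def dsamp_def G_def epow_cmult powr_powr)
      also have "\<dots> = epow (G (dy n k)) \<rho> * ennreal (dy n k powr (\<rho>/p) * (c0 / (dy n k - ?a)))"
      proof -
        have pos: "0 < dy n k - ?a" using Dk[of k] a N by (simp add: algebra_simps)
        have "ennreal (dy n k powr (\<rho>/p)) * ennreal (c0/(dy n k - ?a)) = ennreal (dy n k powr (\<rho>/p) * (c0/(dy n k - ?a)))"
          by (rule ennreal_mult[symmetric]) (use pos c0 in auto)
        then show ?thesis by (metis mult.assoc mult.commute)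
      qed
      also have "dy n k powr (\<rho>/p) * (c0 / (dy n k - ?a)) = ?a powr (\<rho>/p) * (1 / dy n k)"
        unfolding Dk[of k] c0_def by (rule real_id_lower[OF N a])
      also have "epow (G (dy n k)) \<rho> * ennreal (?a powr (\<rho>/p) * (1 / dy n k))
          = epow (ennreal (?a powr (1/p)) * G (dy n k)) \<rho> * ennreal (1 / dy n k)"
      proof -
        have e2: "epow (ennreal (?a powr (1/p)) * G (dy n k)) \<rho> = ennreal (?a powr (\<rho>/p)) * epow (G (dy n k)) \<rho>"
          using p \<rho> by (simp add: epow_cmult powr_powr)
        have e3: "ennreal (?a powr (\<rho>/p) * (1 / dy n k)) = ennreal (?a powr (\<rho>/p)) * ennreal (1 / dy n k)"
          by (rule ennreal_mult) (use a dy_pos[of n k] in auto)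
        show ?thesis unfolding e2 e3 by (simp only: mult_ac)
      qed
      also have "\<dots> \<le> F t" unfolding F_def
      proof (rule mult_mono)
        show "epow (ennreal (?a powr (1/p)) * G (dy n k)) \<rho> \<le> epow (ennreal (t powr (1/p)) * G t) \<rho>"
          unfolding G_def using t by (intro epow_mono \<rho> lorentz_pointwise_lower p) auto
        show "ennreal (1 / dy n k) \<le> ennreal (1 / t)"
          using t a by (intro ennreal_leI) (auto simp: frac_le)
      qed auto
      finally show ?thesis .
    qed
    have "(\<integral>\<^sup>+k. w k * ennreal (dy n k - dy n (k-1)) \<partial>count_space UNIV) \<le> L"
      unfolding L_def by (rule step_lower[OF n wF])
    moreover have "(\<integral>\<^sup>+k. w k * ennreal (dy n k - dy n (k-1)) \<partial>count_space UNIV) = ennreal c0 * T"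
    proof -
      have "w k * ennreal (dy n k - dy n (k-1)) = ennreal c0 * epow (dsamp p n g k) \<rho>" for k
      proof -
        have pos: "0 < dy n k - dy n (k-1)" using Dk[of k] dy_pos[of n "k-1"] N
          by (simp add: algebra_simps)
        then have "ennreal (c0 / (dy n k - dy n (k-1))) * ennreal (dy n k - dy n (k-1)) = ennreal c0"
          using c0 by (simp add: ennreal_mult[symmetric])
        then show ?thesis unfolding w_def by (metis mult.assoc mult.commute)
      qed
      then show ?thesis unfolding T_def by (simp add: nn_integral_cmult)
    qed
    ultimately have "T \<le> ennreal (1/c0) * L" using c0 by (intro ennreal_cancel_le) auto
    then have "epow T (1/\<rho>) \<le> epow (ennreal (1/c0) * L) (1/\<rho>)"
      using \<rho> by (intro epow_mono) auto
    also have "\<dots> = ennreal ((1/c0) powr (1/\<rho>)) * epow L (1/\<rho>)"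
      using \<rho> c0 by (intro epow_cmult) auto
    finally show "Lr r (dsamp p DIM('a) g) \<le> ennreal ((1/c0) powr (1/\<rho>)) * lorentz_norm p r g"
      using False unfolding Lr_def lorentz_norm_def T_def L_def F_def G_def \<rho>_def n_def by simp
  qed
qed

lemma lorentz_upper:
  assumes p: "0 < p" and r: "0 < r"
  shows "\<exists>C>0. \<forall>g::'a::euclidean_space \<Rightarrow> real. lorentz_norm p r g \<le> ennreal C * Lr r (dsamp p DIM('a) g)"
proof -
  define n where "n = DIM('a)"
  have n: "0 < n" by (simp add: n_def)
  define N where "N = (2::real) powr real n"
  have N: "1 < N" using n by (simp add: N_def)
  have Dk: "dy n k = N * dy n (k-1)" for k using dy_prev[of n k] by (simp add: N_def)
  show ?thesis
  proof (cases "r = \<infinity>")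
    case True
    show ?thesis
    proof (intro exI[of _ "N powr (1/p)"] conjI allI)
      show "0 < N powr (1/p)" using N by simp
      fix g :: "'a \<Rightarrow> real"
      have "ennreal (t powr (1/p)) * rearr g t \<le> ennreal (N powr (1/p)) * Lr r (dsamp p n g)" if "0 < t" for t
      proof -
        let ?k = "kt n t"
        have t: "t \<in> {dy n (?k-1)<..dy n ?k}" using dy_Ioc_iff[OF n] that by simp
        have "ennreal (t powr (1/p)) * rearr g t \<le> ennreal (dy n ?k powr (1/p)) * rearr g (dy n (?k-1))"
          using t by (intro lorentz_pointwise_upper p) auto
        also have "dy n ?k powr (1/p) = N powr (1/p) * dy n (?k-1) powr (1/p)"
          unfolding Dk[of ?k] using N dy_pos[of n "?k-1"] by (simp add: powr_mult)
        also have "ennreal (N powr (1/p) * dy n (?k-1) powr (1/p)) * rearr g (dy n (?k-1))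
            = ennreal (N powr (1/p)) * dsamp p n g (?k-1)"
          unfolding dsamp_def using N by (simp add: ennreal_mult mult.assoc)
        also have "\<dots> \<le> ennreal (N powr (1/p)) * Lr r (dsamp p n g)"
          using True by (intro mult_left_mono) (auto simp: Lr_def intro!: SUP_upper)
        finally show ?thesis .
      qed
      then show "lorentz_norm p r g \<le> ennreal (N powr (1/p)) * Lr r (dsamp p DIM('a) g)"
        using True unfolding lorentz_norm_def n_def by (auto intro!: SUP_least)
    qed
  next
    case False
    define \<rho> where "\<rho> = enn2real r"
    have \<rho>: "0 < \<rho>" using r False by (simp add: \<rho>_def enn2real_positive_iff less_top)
    define c2 where "c2 = N powr (\<rho>/p) * (N - 1)"
    have c2: "0 < c2" using N by (simp add: c2_def)
    show ?thesis
    proof (intro exI[of _ "c2 powr (1/\<rho>)"] conjI allI)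
      show "0 < c2 powr (1/\<rho>)" using c2 by simp
      fix g :: "'a \<Rightarrow> real"
      define G where "G = rearr g"
      define F where "F t = epow (ennreal (t powr (1/p)) * G t) \<rho> * ennreal (1/t)" for t
      define w where "w k = epow (dsamp p n g (k-1)) \<rho> * ennreal (c2 / (dy n k - dy n (k-1)))" for k
      define T where "T = (\<integral>\<^sup>+ k. epow (dsamp p n g k) \<rho> \<partial>count_space UNIV)"
      define L where "L = (\<integral>\<^sup>+ t\<in>{0<..}. F t \<partial>lborel)"
      have Fw: "F t \<le> w k" if t: "t \<in> {dy n (k-1)<..dy n k}" for k t
      proof -
        let ?a = "dy n (k-1)"
        have a: "0 < ?a" by (rule dy_pos)
        have pos: "0 < dy n k - ?a" using Dk[of k] a N by (simp add: algebra_simps)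
        have "F t \<le> epow (ennreal (dy n k powr (1/p)) * G ?a) \<rho> * ennreal (1 / ?a)"
          unfolding F_def
        proof (rule mult_mono)
          show "epow (ennreal (t powr (1/p)) * G t) \<rho> \<le> epow (ennreal (dy n k powr (1/p)) * G ?a) \<rho>"
            unfolding G_def using t by (intro epow_mono \<rho> lorentz_pointwise_upper p) auto
          show "ennreal (1 / t) \<le> ennreal (1 / ?a)"
            using t a by (intro ennreal_leI) (auto simp: frac_le)
        qed auto
        also have "\<dots> = epow (G ?a) \<rho> * ennreal (dy n k powr (\<rho>/p) * (1 / ?a))"
        proof -
          have e2: "epow (ennreal (dy n k powr (1/p)) * G ?a) \<rho> = ennreal (dy n k powr (\<rho>/p)) * epow (G ?a) \<rho>"
            using p \<rho> by (simp add: epow_cmult powr_powr)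
          have e3: "ennreal (dy n k powr (\<rho>/p) * (1 / ?a)) = ennreal (dy n k powr (\<rho>/p)) * ennreal (1 / ?a)"
            by (rule ennreal_mult) (use a in auto)
          show ?thesis unfolding e2 e3 by (simp only: mult_ac)
        qed
        also have "dy n k powr (\<rho>/p) * (1 / ?a) = ?a powr (\<rho>/p) * (c2 / (dy n k - ?a))"
          unfolding Dk[of k] c2_def by (rule real_id_upper[OF N a, symmetric])
        also have "epow (G ?a) \<rho> * ennreal (?a powr (\<rho>/p) * (c2 / (dy n k - ?a))) = w k"
        proof -
          have e2: "epow (dsamp p n g (k-1)) \<rho> = ennreal (?a powr (\<rho>/p)) * epow (G ?a) \<rho>"
            using p \<rho> by (simp add: dsamp_def G_def epow_cmult powr_powr)
          have e3: "ennreal (?a powr (\<rho>/p) * (c2 / (dy n k - ?a))) = ennreal (?a powr (\<rho>/p)) * ennreal (c2 / (dy n k - ?a))"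
            by (rule ennreal_mult) (use pos c2 in auto)
          show ?thesis unfolding w_def e2 e3 by (simp only: mult_ac)
        qed
        finally show ?thesis .
      qed
      have "L \<le> (\<integral>\<^sup>+k. w k * ennreal (dy n k - dy n (k-1)) \<partial>count_space UNIV)"
        unfolding L_def by (rule step_upper[OF n Fw])
      also have "(\<integral>\<^sup>+k. w k * ennreal (dy n k - dy n (k-1)) \<partial>count_space UNIV)
          = (\<integral>\<^sup>+k. ennreal c2 * epow (dsamp p n g (k-1)) \<rho> \<partial>count_space UNIV)"
      proof (rule nn_integral_cong)
        fix k
        have pos: "0 < dy n k - dy n (k-1)" using Dk[of k] dy_pos[of n "k-1"] N
          by (simp add: algebra_simps)
        then have "ennreal (c2 / (dy n k - dy n (k-1))) * ennreal (dy n k - dy n (k-1)) = ennreal c2"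
          using c2 by (simp add: ennreal_mult[symmetric])
        then show "w k * ennreal (dy n k - dy n (k-1)) = ennreal c2 * epow (dsamp p n g (k-1)) \<rho>"
          unfolding w_def by (metis mult.assoc mult.commute)
      qed
      also have "\<dots> = ennreal c2 * (\<integral>\<^sup>+k. epow (dsamp p n g (k-1)) \<rho> \<partial>count_space UNIV)"
        by (simp add: nn_integral_cmult)
      also have "(\<integral>\<^sup>+k. epow (dsamp p n g (k-1)) \<rho> \<partial>count_space UNIV) = T"
        unfolding T_def
        by (rule nn_integral_bij_count_space[where g="\<lambda>k. k - 1" and f="\<lambda>k. epow (dsamp p n g k) \<rho>"])
           (auto simp: bij_betw_def inj_on_def image_iff intro!: exI[of _ "x + 1" for x])
      finally have "L \<le> ennreal c2 * T" .
      then have "epow L (1/\<rho>) \<le> epow (ennreal c2 * T) (1/\<rho>)"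
        using \<rho> by (intro epow_mono) auto
      also have "\<dots> = ennreal (c2 powr (1/\<rho>)) * epow T (1/\<rho>)"
        using \<rho> c2 by (intro epow_cmult) auto
      finally show "lorentz_norm p r g \<le> ennreal (c2 powr (1/\<rho>)) * Lr r (dsamp p DIM('a) g)"
        using False unfolding Lr_def lorentz_norm_def T_def L_def F_def G_def \<rho>_def n_def by simp
    qed
  qed
qed

lemma I1:
  fixes \<delta> qq p s s' n jj :: real
  assumes "0 \<le> \<delta>" "0 < qq" "0 < p" and bal: "s' - s = n * (1/qq - 1/p)"
  shows "(\<delta> / ((2 powr ((s - s')/2))^i * (2 powr (n*(jj - real i))) powr (1/p))) powr qq * 2 powr (n*(jj - real i + 1))
       = \<delta> powr qq * 2 powr (n + qq*(s'-s)*jj) * (2 powr (-(qq*(s'-s))/2))^i"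
proof -
  define X where "X = (s - s')/2 * i + n*(jj - real i)/p"
  have e1: "(2 powr ((s - s')/2))^i * (2 powr (n*(jj - real i))) powr (1/p) = 2 powr X"
    unfolding X_def by (simp add: powr_power powr_powr powr_add mult.commute)
  have e2: "(\<delta> / 2 powr X) powr qq = \<delta> powr qq * 2 powr (- qq * X)"
    using assms by (simp add: powr_divide powr_powr powr_minus_divide mult.commute)
  have e3: "(2 powr (-(qq*(s'-s))/2))^i = 2 powr (- qq*(s'-s)/2 * i)"
    by (simp add: powr_power mult.commute)
  have ex: "- qq * X + n*(jj - real i + 1) = (n + qq*(s'-s)*jj) + (- qq*(s'-s)/2 * i)"
  proof -
    have "qq*(s'-s)*(jj - real i) = qq*(n * (1/qq - 1/p))*(jj - real i)" by (simp only: bal)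
    also have "\<dots> = n*(jj - real i) - qq * (n*(jj - real i)/p)"
      using assms by (simp add: field_simps)
    finally have H: "n*(jj - real i) - qq * (n*(jj - real i)/p) = qq*(s'-s)*(jj - real i)" by simp
    show ?thesis using H unfolding X_def
      by (simp add: algebra_simps diff_divide_distrib add_divide_distrib)
  qed
  have "(\<delta> / ((2 powr ((s - s')/2))^i * (2 powr (n*(jj - real i))) powr (1/p))) powr qq * 2 powr (n*(jj - real i + 1))
      = \<delta> powr qq * (2 powr (- qq * X) * 2 powr (n*(jj - real i + 1)))"
    unfolding e1 e2 by (simp only: mult.assoc)
  also have "2 powr (- qq * X) * 2 powr (n*(jj - real i + 1)) = 2 powr (- qq * X + n*(jj - real i + 1))"
    by (rule powr_add[symmetric])
  also have "\<dots> = 2 powr (n + qq*(s'-s)*jj) * 2 powr (- qq*(s'-s)/2 * i)"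
    unfolding ex by (rule powr_add)
  finally show ?thesis unfolding e3 by (simp only: mult.assoc)
qed

lemma I2:
  fixes \<delta> qq s s' n jj K1 Z :: real
  assumes "0 \<le> \<delta>" "0 < qq" "0 < K1" "0 < Z"
  shows "K1 powr qq * 2 powr (- jj * s' * qq) * (\<delta> powr qq * 2 powr (n + qq*(s'-s)*jj) * Z)
       = (K1 * Z powr (1/qq) * 2 powr (n/qq) * \<delta> * 2 powr (- jj * s)) powr qq"
proof -
  have a: "(K1 * Z powr (1/qq) * 2 powr (n/qq) * \<delta> * 2 powr (- jj * s)) powr qq
      = K1 powr qq * (Z powr (1/qq)) powr qq * (2 powr (n/qq)) powr qq * \<delta> powr qq * (2 powr (- jj * s)) powr qq"
    using assms by (simp add: powr_mult)
  have b: "(Z powr (1/qq)) powr qq = Z" "(2 powr (n/qq)) powr qq = 2 powr n"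
     "(2 powr (- jj * s)) powr qq = 2 powr (- jj * s * qq)"
    using assms by (simp_all add: powr_powr)
  have c: "2 powr (- jj * s' * qq) * 2 powr (n + qq*(s'-s)*jj) = 2 powr n * 2 powr (- jj * s * qq)"
  proof -
    have "2 powr (- jj * s' * qq) * 2 powr (n + qq*(s'-s)*jj) = 2 powr (- jj * s' * qq + (n + qq*(s'-s)*jj))"
      by (rule powr_add[symmetric])
    also have "- jj * s' * qq + (n + qq*(s'-s)*jj) = n + (- jj * s * qq)" by (simp add: algebra_simps)
    also have "2 powr (n + (- jj * s * qq)) = 2 powr n * 2 powr (- jj * s * qq)" by (rule powr_add)
    finally show ?thesis .
  qed
  have "K1 powr qq * 2 powr (- jj * s' * qq) * (\<delta> powr qq * 2 powr (n + qq*(s'-s)*jj) * Z)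
     = K1 powr qq * \<delta> powr qq * Z * (2 powr (- jj * s' * qq) * 2 powr (n + qq*(s'-s)*jj))"
    by (simp only: mult_ac)
  also have "\<dots> = K1 powr qq * \<delta> powr qq * Z * (2 powr n * 2 powr (- jj * s * qq))"
    by (simp only: c)
  also have "\<dots> = K1 powr qq * Z * 2 powr n * \<delta> powr qq * 2 powr (- jj * s * qq)"
    by (simp only: mult_ac)
  finally show ?thesis unfolding a b .
qed

lemma ennreal_div_bound:
  assumes "0 < c" "0 \<le> \<delta>" "ennreal c * X \<le> ennreal \<delta>" shows "X \<le> ennreal (\<delta> / c)"
  using ennreal_cancel_le[OF assms(1,3)] assms by (simp add: ennreal_mult[symmetric] divide_inverse mult.commute)

lemma g_meas[measurable]:
  fixes f :: "'a::euclidean_space \<Rightarrow> real"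
  assumes [measurable]: "f \<in> borel_measurable lebesgue"
  shows "(\<lambda>x. norm x powr s' * f x) \<in> borel_measurable lebesgue"
proof -
  have h: "(\<lambda>x::'a. norm x powr s') \<in> borel_measurable lebesgue"
    by (rule measurable_completion) measurable
  show ?thesis by (rule borel_measurable_times[OF h assms])
qed

lemma Lq_norm_fin:
  assumes "0 < qq"
  shows "Lq_norm (ennreal qq) h = epow (\<integral>\<^sup>+ x. ennreal (\<bar>h x\<bar> powr qq) \<partial>lebesgue) (1/qq)"
  using assms by (simp add: Lq_norm_def)

lemma null_level:
  fixes g :: "'a::euclidean_space \<Rightarrow> real"
  assumes [measurable]: "g \<in> borel_measurable lebesgue" and "0 < n"
  shows "{x. \<forall>i::nat. rearr g (dy n (j - int i - 1)) < ennreal \<bar>g x\<bar>} \<in> null_sets lebesgue"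
proof -
  have gm: "(\<lambda>x. ennreal \<bar>g x\<bar>) \<in> borel_measurable lebesgue" by measurable
  let ?N = "{x. \<forall>i::nat. rearr g (dy n (j - int i - 1)) < ennreal \<bar>g x\<bar>}"
  have Ni: "?N = (\<Inter>i. {x. rearr g (dy n (j - int i - 1)) < ennreal \<bar>g x\<bar>})" by auto
  have meas: "?N \<in> sets lebesgue" unfolding Ni
    using lebesgue_set_less_enn[OF gm] by (intro sets.countable_INT') auto
  have bound: "emeasure lebesgue ?N \<le> ennreal (dy n (j - int i - 1))" for i
    by (rule order_trans[OF emeasure_mono rearr_level]) (auto simp: lebesgue_set_less_enn[OF gm])
  have "emeasure lebesgue ?N \<le> 0"
  proof (rule ennreal_le_epsilon)
    fix e :: real assume "0 < e"
    define i where "i = nat (\<lceil>real_of_int j - log 2 e / real n\<rceil> + 1)"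
    have "real_of_int j - log 2 e / real n < real_of_int (int i)"
      unfolding i_def by linarith
    then have "real n * (real_of_int j - real i) < log 2 e"
      using assms(2) by (simp add: field_simps)
    then have "dy n (j - int i - 1) < e"
      using \<open>0 < e\<close> by (simp add: dy_def powr_less_iff)
    then show "emeasure lebesgue ?N \<le> 0 + ennreal e"
      using bound[of i] by (simp add: order_trans[OF _ ennreal_leI])
  qed
  then show ?thesis using meas by (simp add: null_sets_def)
qed

lemma part1_core:
  fixes f :: "'a::euclidean_space \<Rightarrow> real" and s s' p qq \<delta> :: real and j :: int
  assumes f[measurable]: "f \<in> borel_measurable lebesgue"
   and p: "0 < p" and qq: "0 < qq" "qq < p"
   and bal: "s' - s = real DIM('a) * (1/qq - 1/p)"
   and \<delta>: "0 \<le> \<delta>"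
   and hyp: "\<And>i::nat. ennreal ((2 powr ((s - s')/2))^i) * dsamp p DIM('a) (\<lambda>x. norm x powr s' * f x) (j - int i - 1) \<le> ennreal \<delta>"
  shows "ennreal (2 powr (real_of_int j * s)) * Lq_norm (ennreal qq) (\<lambda>x. f x * indicator (annulus j) x)
         \<le> ennreal (max 1 (2 powr s') * (1 / (1 - 2 powr (-(qq*(s'-s))/2))) powr (1/qq) * 2 powr (real DIM('a)/qq) * \<delta>)"
proof -
  define n where "n = DIM('a)"
  have n: "0 < n" by (simp add: n_def)
  define g where "g = (\<lambda>x. norm x powr s' * f x)"
  have g[measurable]: "g \<in> borel_measurable lebesgue" unfolding g_def by (rule g_meas[OF f])
  have gm: "(\<lambda>x. ennreal \<bar>g x\<bar>) \<in> borel_measurable lebesgue" by measurable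
  define G where "G = rearr g"
  define \<theta> where "\<theta> = (2::real) powr ((s - s')/2)"
  have \<theta>: "0 < \<theta>" by (simp add: \<theta>_def)
  define \<beta> where "\<beta> = qq*(s'-s)"
  have "1/p < 1/qq" using qq p by (simp add: frac_less2)
  then have "0 < s' - s" using n by (simp add: bal n_def)
  then have \<beta>: "0 < \<beta>" using qq by (simp add: \<beta>_def)
  define \<rho>0 where "\<rho>0 = (2::real) powr (-\<beta>/2)"
  have \<rho>0: "0 < \<rho>0" "\<rho>0 < 1" using \<beta> by (auto simp: \<rho>0_def intro!: powr_less_one)
  define Z where "Z = 1/(1-\<rho>0)"
  have Z: "0 < Z" using \<rho>0 by (simp add: Z_def)
  define K1 where "K1 = max 1 ((2::real) powr s')"
  have K1: "0 < K1" by (simp add: K1_def)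
  define a where "a i = dy n (j - int i - 1)" for i :: nat
  have a: "0 < a i" for i by (simp add: a_def dy_pos)
  define \<gamma> where "\<gamma> i = \<delta> / (\<theta>^i * a i powr (1/p))" for i
  have \<gamma>: "0 \<le> \<gamma> i" for i using \<delta> \<theta> a by (simp add: \<gamma>_def)
  have Gb: "G (a i) \<le> ennreal (\<gamma> i)" for i
  proof -
    have "ennreal (\<theta>^i * a i powr (1/p)) * G (a i) \<le> ennreal \<delta>"
      using hyp[of i] \<theta> by (simp add: dsamp_def \<theta>_def[symmetric] a_def G_def g_def n_def ennreal_mult mult.assoc)
    moreover have pos: "0 < \<theta>^i * a i powr (1/p)" using \<theta> a[of i] by simp
    ultimately show ?thesis unfolding \<gamma>_def using ennreal_div_bound[OF pos \<delta>] by blast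
  qed
  define S where "S i = annulus j \<inter> (if i = 0 then UNIV else {x. G (dy n (j - int i)) < ennreal \<bar>g x\<bar>})" for i :: nat
  have S_meas: "S i \<in> sets lebesgue" for i
    using lebesgue_set_less_enn[OF gm] by (auto simp: S_def)
  have S_bound: "emeasure lebesgue (S i) \<le> ennreal (dy n (j - int i))" for i
  proof (cases "i = 0")
    case True
    then show ?thesis using annulus_measure[of j, where 'a='a] by (simp add: S_def n_def)
  next
    case False
    have "emeasure lebesgue (S i) \<le> emeasure lebesgue {x. G (dy n (j - int i)) < ennreal \<bar>g x\<bar>}"
      using False lebesgue_set_less_enn[OF gm] by (intro emeasure_mono) (auto simp: S_def)
    also have "\<dots> \<le> ennreal (dy n (j - int i))" unfolding G_def by (rule rearr_level[OF g])
    finally show ?thesis .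
  qed
  define N0 where "N0 = {x. \<forall>i::nat. G (a i) < ennreal \<bar>g x\<bar>}"
  have N0: "N0 \<in> null_sets lebesgue" unfolding N0_def a_def G_def by (rule null_level[OF g n])
  have PW: "AE x in lebesgue. ennreal (\<bar>g x\<bar> powr qq) * indicator (annulus j) x \<le> (\<Sum>i. ennreal (\<gamma> i powr qq) * indicator (S i) x)"
  proof (rule AE_I'[OF N0], safe)
    fix x assume nle: "\<not> ennreal (\<bar>g x\<bar> powr qq) * indicator (annulus j) x \<le> (\<Sum>i. ennreal (\<gamma> i powr qq) * indicator (S i) x)"
    show "x \<in> N0"
    proof (rule ccontr)
      assume "x \<notin> N0"
      then obtain i1 where i1: "\<not> G (a i1) < ennreal \<bar>g x\<bar>" by (auto simp: N0_def)
      define i0 where "i0 = (LEAST i. \<not> G (a i) < ennreal \<bar>g x\<bar>)"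
      have i0: "\<not> G (a i0) < ennreal \<bar>g x\<bar>" unfolding i0_def by (rule LeastI[of _ i1]) (rule i1)
      have xS: "x \<in> S i0" if xA: "x \<in> annulus j"
      proof (cases i0)
        case 0 then show ?thesis using xA by (simp add: S_def)
      next
        case (Suc k)
        then have "G (a k) < ennreal \<bar>g x\<bar>" using not_less_Least[of k "\<lambda>i. \<not> G (a i) < ennreal \<bar>g x\<bar>"]
          unfolding i0_def by auto
        moreover have "a k = dy n (j - int i0)" using Suc by (simp add: a_def algebra_simps)
        ultimately show ?thesis using xA Suc by (simp add: S_def)
      qed
      have "ennreal \<bar>g x\<bar> \<le> ennreal (\<gamma> i0)" using i0 Gb[of i0] by (simp add: not_less)
      then have gle: "\<bar>g x\<bar> \<le> \<gamma> i0" using \<gamma>[of i0] by (simp add: ennreal_le_iff)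
      have "ennreal (\<bar>g x\<bar> powr qq) * indicator (annulus j) x \<le> ennreal (\<gamma> i0 powr qq) * indicator (S i0) x"
      proof (cases "x \<in> annulus j")
        case True
        then show ?thesis using xS gle qq by (simp add: ennreal_leI powr_mono2)
      qed simp
      also have "\<dots> \<le> (\<Sum>i. ennreal (\<gamma> i powr qq) * indicator (S i) x)" by (rule ennreal_le_suminf)
      finally show False using nle by simp
    qed
  qed
  have termeq: "\<gamma> i powr qq * dy n (j - int i) = \<delta> powr qq * 2 powr (n + \<beta> * j) * \<rho>0^i" for i
  proof -
    have "a i = 2 powr (n*(real_of_int j - real i))" by (simp add: a_def dy_def)
    moreover have "dy n (j - int i) = 2 powr (n*(real_of_int j - real i + 1))" by (simp add: dy_def)
    ultimately show ?thesis unfolding \<gamma>_def \<theta>_def \<rho>0_def \<beta>_def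
      using I1[OF \<delta> qq(1) p, where s=s and s'=s' and n="real n" and jj="real_of_int j" and i=i] bal by (simp add: n_def mult.commute)
  qed
  have sumgeo: "(\<Sum>i. ennreal (\<delta> powr qq * 2 powr (n + \<beta> * j) * \<rho>0^i)) = ennreal (\<delta> powr qq * 2 powr (n + \<beta> * j) * Z)"
  proof -
    have "(\<lambda>i. \<delta> powr qq * 2 powr (n + \<beta> * j) * \<rho>0^i) sums (\<delta> powr qq * 2 powr (n + \<beta> * j) * Z)"
      unfolding Z_def using \<rho>0 by (intro sums_mult geometric_sums) auto
    then show ?thesis using \<rho>0 by (intro suminf_ennreal_eq) auto
  qed
  have int_g: "(\<integral>\<^sup>+x. ennreal (\<bar>g x\<bar> powr qq) * indicator (annulus j) x \<partial>lebesgue) \<le> ennreal (\<delta> powr qq * 2 powr (n + \<beta> * j) * Z)"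
  proof -
    have "(\<integral>\<^sup>+x. ennreal (\<bar>g x\<bar> powr qq) * indicator (annulus j) x \<partial>lebesgue)
       \<le> (\<integral>\<^sup>+x. (\<Sum>i. ennreal (\<gamma> i powr qq) * indicator (S i) x) \<partial>lebesgue)"
      by (rule nn_integral_mono_AE[OF PW])
    also have "\<dots> = (\<Sum>i. \<integral>\<^sup>+x. ennreal (\<gamma> i powr qq) * indicator (S i) x \<partial>lebesgue)"
      by (rule nn_integral_suminf) (use S_meas in auto)
    also have "\<dots> = (\<Sum>i. ennreal (\<gamma> i powr qq) * emeasure lebesgue (S i))"
      by (simp add: nn_integral_cmult_indicator S_meas)
    also have "\<dots> \<le> (\<Sum>i. ennreal (\<gamma> i powr qq * dy n (j - int i)))"
      by (intro suminf_le summableI) (simp add: ennreal_mult mult_left_mono S_bound dy_pos less_imp_le)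
    also have "\<dots> = ennreal (\<delta> powr qq * 2 powr (n + \<beta> * j) * Z)"
      unfolding termeq by (rule sumgeo)
    finally show ?thesis .
  qed
  have pwf: "ennreal (\<bar>f x * indicator (annulus j) x\<bar> powr qq)
      \<le> ennreal (K1 powr qq * 2 powr (- real_of_int j * s' * qq)) * (ennreal (\<bar>g x\<bar> powr qq) * indicator (annulus j) x)" for x
  proof (cases "x \<in> annulus j")
    case True
    have nx: "0 < norm x" using annulus_nonzero[OF True] by simp
    have fx: "\<bar>f x\<bar> = norm x powr (-s') * \<bar>g x\<bar>"
      using nx by (simp add: g_def abs_mult powr_minus field_simps)
    have nb: "norm x powr (-s') \<le> K1 * 2 powr (real_of_int j * (-s'))"
      using annulus_norm_powr_le[OF True, of "-s'"] by (simp add: K1_def)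
    have "\<bar>f x\<bar> powr qq \<le> (K1 * 2 powr (real_of_int j * (-s')) * \<bar>g x\<bar>) powr qq"
      unfolding fx using qq nb by (intro powr_mono2 mult_right_mono) auto
    also have "\<dots> = K1 powr qq * 2 powr (- real_of_int j * s' * qq) * \<bar>g x\<bar> powr qq"
      using K1 by (simp add: powr_mult powr_powr)
    finally show ?thesis using True K1
      by (simp add: ennreal_mult[symmetric] ennreal_leI)
  qed simp
  have int_f: "(\<integral>\<^sup>+x. ennreal (\<bar>f x * indicator (annulus j) x\<bar> powr qq) \<partial>lebesgue)
     \<le> ennreal (K1 powr qq * 2 powr (- real_of_int j * s' * qq)) * (\<integral>\<^sup>+x. ennreal (\<bar>g x\<bar> powr qq) * indicator (annulus j) x \<partial>lebesgue)"
  proof -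
    have "(\<integral>\<^sup>+x. ennreal (\<bar>f x * indicator (annulus j) x\<bar> powr qq) \<partial>lebesgue)
      \<le> (\<integral>\<^sup>+x. ennreal (K1 powr qq * 2 powr (- real_of_int j * s' * qq)) * (ennreal (\<bar>g x\<bar> powr qq) * indicator (annulus j) x) \<partial>lebesgue)"
      by (intro nn_integral_mono pwf)
    also have "\<dots> = ennreal (K1 powr qq * 2 powr (- real_of_int j * s' * qq)) * (\<integral>\<^sup>+x. ennreal (\<bar>g x\<bar> powr qq) * indicator (annulus j) x \<partial>lebesgue)"
      by (rule nn_integral_cmult) measurable
    finally show ?thesis .
  qed
  define Y where "Y = K1 * Z powr (1/qq) * 2 powr (n/qq) * \<delta> * 2 powr (- real_of_int j * s)"
  have Y: "0 \<le> Y" using K1 Z \<delta> by (simp add: Y_def)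
  have "(\<integral>\<^sup>+x. ennreal (\<bar>f x * indicator (annulus j) x\<bar> powr qq) \<partial>lebesgue)
     \<le> ennreal (K1 powr qq * 2 powr (- real_of_int j * s' * qq)) * ennreal (\<delta> powr qq * 2 powr (n + \<beta> * j) * Z)"
    using int_f int_g by (meson mult_left_mono order_trans zero_le)
  also have "\<dots> = ennreal (K1 powr qq * 2 powr (- real_of_int j * s' * qq) * (\<delta> powr qq * 2 powr (n + \<beta> * j) * Z))"
    by (rule ennreal_mult'[symmetric]) simp
  also have "\<dots> = ennreal (Y powr qq)"
    unfolding Y_def \<beta>_def
    by (rule arg_cong[where f=ennreal, OF I2[OF \<delta> qq(1) K1 Z, where jj="real_of_int j" and s'=s' and n="real n" and s=s]])
  finally have I: "(\<integral>\<^sup>+x. ennreal (\<bar>f x * indicator (annulus j) x\<bar> powr qq) \<partial>lebesgue) \<le> ennreal (Y powr qq)" .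
  have "Lq_norm (ennreal qq) (\<lambda>x. f x * indicator (annulus j) x) \<le> epow (ennreal (Y powr qq)) (1/qq)"
    unfolding Lq_norm_fin[OF qq(1)] using qq by (intro epow_mono I) auto
  also have "\<dots> = ennreal Y" using Y qq by (simp add: epow_ennreal powr_powr)
  finally have L: "Lq_norm (ennreal qq) (\<lambda>x. f x * indicator (annulus j) x) \<le> ennreal Y" .
  have "ennreal (2 powr (real_of_int j * s)) * Lq_norm (ennreal qq) (\<lambda>x. f x * indicator (annulus j) x)
     \<le> ennreal (2 powr (real_of_int j * s)) * ennreal Y" by (intro mult_left_mono L) simp
  also have "\<dots> = ennreal (2 powr (real_of_int j * s) * Y)" using Y by (simp add: ennreal_mult)
  also have "2 powr (real_of_int j * s) * Y = K1 * Z powr (1/qq) * 2 powr (n/qq) * \<delta>"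
  proof -
    have "2 powr (real_of_int j * s) * 2 powr (- real_of_int j * s) = 1" by (simp add: powr_add[symmetric])
    then show ?thesis unfolding Y_def by (metis (no_types, lifting) mult.commute mult.left_commute mult_1)
  qed
  finally show ?thesis by (simp add: K1_def Z_def \<rho>0_def \<beta>_def n_def)
qed

lemma J1:
  fixes ep qq s s' K2 kk :: real
  assumes "0 \<le> ep" "0 < qq" "0 < K2"
  shows "K2 powr qq * 2 powr ((kk + real i) * s' * qq) * (ep / ((2 powr ((s'-s)/2))^i * 2 powr ((kk + real i)* s))) powr qq
       = K2 powr qq * ep powr qq * 2 powr (-(s-s')*qq*kk) * (2 powr (-((s-s')*qq)/2))^i"
proof -
  define X where "X = (s'-s)/2 * i + (kk + real i)* s"
  have e1: "(2 powr ((s'-s)/2))^i * 2 powr ((kk + real i)* s) = 2 powr X"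
    unfolding X_def by (simp add: powr_power powr_add mult.commute)
  have e2: "(ep / 2 powr X) powr qq = ep powr qq * 2 powr (- qq * X)"
    using assms by (simp add: powr_divide powr_powr powr_minus_divide mult.commute)
  have e3: "(2 powr (-((s-s')*qq)/2))^i = 2 powr (-((s-s')*qq)/2 * i)"
    by (simp add: powr_power mult.commute)
  have ex: "(kk + real i) * s' * qq + (- qq * X) = (-(s-s')*qq*kk) + (-((s-s')*qq)/2 * i)"
    unfolding X_def by (simp add: field_simps)
  have "K2 powr qq * 2 powr ((kk + real i) * s' * qq) * (ep / ((2 powr ((s'-s)/2))^i * 2 powr ((kk + real i)* s))) powr qq
      = K2 powr qq * ep powr qq * (2 powr ((kk + real i) * s' * qq) * 2 powr (- qq * X))"
    unfolding e1 e2 by (simp only: mult_ac)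
  also have "2 powr ((kk + real i) * s' * qq) * 2 powr (- qq * X) = 2 powr ((kk + real i) * s' * qq + (- qq * X))"
    by (rule powr_add[symmetric])
  also have "\<dots> = 2 powr (-(s-s')*qq*kk) * 2 powr (-((s-s')*qq)/2 * i)"
    unfolding ex by (rule powr_add)
  finally show ?thesis unfolding e3 by (simp only: mult_ac)
qed

lemma J3:
  fixes ep qq p s s' K2 kk n Z :: real
  assumes "0 \<le> ep" "0 < qq" "0 < K2" "0 < Z" "1 < 2 powr n" and bal: "s - s' = n*(1/p - 1/qq)"
  shows "(2 powr (n*(kk+1))) powr (1/p) * (K2 powr qq * ep powr qq * 2 powr (-(s-s')*qq*kk) * Z / ((2 powr n - 1) * 2 powr (n*kk))) powr (1/qq)
       = K2 * Z powr (1/qq) * (2 powr n - 1) powr (-1/qq) * 2 powr (n/p) * ep"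
proof -
  have N: "0 < 2 powr n - 1" using assms by simp
  have a: "(K2 powr qq * ep powr qq * 2 powr (-(s-s')*qq*kk) * Z / ((2 powr n - 1) * 2 powr (n*kk))) powr (1/qq)
     = (K2 powr qq) powr (1/qq) * (ep powr qq) powr (1/qq) * (2 powr (-(s-s')*qq*kk)) powr (1/qq) * Z powr (1/qq)
        / ((2 powr n - 1) powr (1/qq) * (2 powr (n*kk)) powr (1/qq))"
    using assms N by (simp add: powr_divide powr_mult)
  also have "\<dots> = K2 * ep * 2 powr (-(s-s')*kk) * Z powr (1/qq) / ((2 powr n - 1) powr (1/qq) * 2 powr (n*kk/qq))"
    using assms(1-5) by (simp add: powr_powr mult.assoc)
  finally have a: "(K2 powr qq * ep powr qq * 2 powr (-(s-s')*qq*kk) * Z / ((2 powr n - 1) * 2 powr (n*kk))) powr (1/qq)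
      = K2 * ep * 2 powr (-(s-s')*kk) * Z powr (1/qq) / ((2 powr n - 1) powr (1/qq) * 2 powr (n*kk/qq))" .
  have b: "(2 powr (n*(kk+1))) powr (1/p) = 2 powr (n*(kk+1)/p)" by (simp add: powr_powr)
  have c: "2 powr (n*(kk+1)/p) * 2 powr (-(s-s')*kk) / 2 powr (n*kk/qq) = 2 powr (n/p)"
  proof -
    have "2 powr (n*(kk+1)/p) * 2 powr (-(s-s')*kk) / 2 powr (n*kk/qq) = 2 powr (n*(kk+1)/p + (-(s-s')*kk) - n*kk/qq)"
      by (simp add: powr_add powr_diff)
    also have "n*(kk+1)/p + (-(s-s')*kk) - n*kk/qq = n/p"
      unfolding bal by (simp add: algebra_simps add_divide_distrib diff_divide_distrib)
    finally show ?thesis .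
  qed
  have d: "(2 powr n - 1) powr (-1/qq) = 1 / (2 powr n - 1) powr (1/qq)"
    by (simp add: powr_minus_divide)
  show ?thesis unfolding a b d using c
    by (simp add: field_simps)
qed

lemma ball_lebesgue: "{x::'a::euclidean_space. norm x < R} \<in> sets lebesgue"
proof -
  have "{x::'a. norm x < R} = ball 0 R" by (auto simp: mem_ball)
  then show ?thesis by (metis borel_open open_ball sets_completionI_sets sets_lborel)
qed

lemma level_cover:
  fixes g :: "'a::euclidean_space \<Rightarrow> real"
  assumes g[measurable]: "g \<in> borel_measurable lebesgue" and l: "0 \<le> l"
  shows "emeasure lebesgue {x. l < \<bar>g x\<bar>} \<le> ennreal (dy DIM('a) (k-1)) + (\<Sum>i. emeasure lebesgue (annulus (k + int i) \<inter> {x. l < \<bar>g x\<bar>}))"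
proof -
  have gm: "(\<lambda>x. \<bar>g x\<bar>) \<in> borel_measurable lebesgue" by measurable
  define B where "B = {x::'a. norm x < 2 powr real_of_int (k-1)}"
  define U where "U i = annulus (k + int i) \<inter> {x. l < \<bar>g x\<bar>}" for i :: nat
  have Um: "U i \<in> sets lebesgue" for i unfolding U_def by (intro sets.Int annulus_lebesgue lebesgue_set_less[OF gm])
  have UU: "(\<Union>i. U i) \<in> sets lebesgue" using Um by (intro sets.countable_UN) auto
  have Bm: "B \<in> sets lebesgue" unfolding B_def by (rule ball_lebesgue)
  have sub: "{x. l < \<bar>g x\<bar>} \<subseteq> B \<union> (\<Union>i. U i)"
  proof
    fix x assume x: "x \<in> {x. l < \<bar>g x\<bar>}"
    show "x \<in> B \<union> (\<Union>i. U i)"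
    proof (cases "norm x < 2 powr real_of_int (k-1)")
      case True then show ?thesis by (simp add: B_def)
    next
      case False
      have "0 < 2 powr real_of_int (k-1)" by simp
      then have "x \<noteq> 0" using False by (metis norm_zero)
      define j0 where "j0 = \<lfloor>log 2 (norm x)\<rfloor> + 1"
      have xa: "x \<in> annulus j0" unfolding j0_def by (rule mem_annulus[OF \<open>x \<noteq> 0\<close>])
      then have "norm x < 2 powr real_of_int j0" by (simp add: annulus_def)
      moreover have "2 powr real_of_int (k-1) \<le> norm x" using False by linarith
      ultimately have "2 powr real_of_int (k-1) < 2 powr real_of_int j0" by linarith
      then have "k \<le> j0" by simp
      then have "k + int (nat (j0 - k)) = j0" by simp
      then have "x \<in> U (nat (j0 - k))" using xa x by (simp add: U_def)
      then show ?thesis by blast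
    qed
  qed
  have "emeasure lebesgue {x. l < \<bar>g x\<bar>} \<le> emeasure lebesgue (B \<union> (\<Union>i. U i))"
    by (rule emeasure_mono[OF sub sets.Un[OF Bm UU]])
  also have "\<dots> \<le> emeasure lebesgue B + emeasure lebesgue (\<Union>i. U i)"
    by (rule emeasure_subadditive[OF Bm UU])
  also have "\<dots> \<le> ennreal (dy DIM('a) (k-1)) + (\<Sum>i. emeasure lebesgue (U i))"
  proof (rule add_mono)
    show "emeasure lebesgue B \<le> ennreal (dy DIM('a) (k-1))" unfolding B_def by (rule ball_measure_pow)
    show "emeasure lebesgue (\<Union>i. U i) \<le> (\<Sum>i. emeasure lebesgue (U i))"
      using Um by (intro emeasure_subadditive_countably) auto
  qed
  finally show ?thesis unfolding U_def .
qed

lemma markov: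
  fixes g :: "'a::euclidean_space \<Rightarrow> real"
  assumes g[measurable]: "g \<in> borel_measurable lebesgue" and l: "0 < l" and qq: "0 < qq"
    and A[measurable]: "A \<in> sets lebesgue"
  shows "emeasure lebesgue (A \<inter> {x. l < \<bar>g x\<bar>}) \<le> ennreal (1 / l powr qq) * (\<integral>\<^sup>+x. ennreal (\<bar>g x\<bar> powr qq) * indicator A x \<partial>lebesgue)"
proof -
  have um: "(\<lambda>x. ennreal (\<bar>g x\<bar> powr qq) * indicator A x) \<in> borel_measurable lebesgue" by measurable
  have "A \<inter> {x. l < \<bar>g x\<bar>} \<subseteq> {x\<in>A. 1 \<le> ennreal (1 / l powr qq) * ennreal (\<bar>g x\<bar> powr qq)}"
  proof safe
    fix x assume "x \<in> A" "l < \<bar>g x\<bar>"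
    then have "l powr qq < \<bar>g x\<bar> powr qq" using l qq by (intro powr_less_mono2) auto
    moreover have "0 < l powr qq" using l by simp
    ultimately have "1 \<le> (1 / l powr qq) * (\<bar>g x\<bar> powr qq)" by (simp add: le_divide_eq)
    then have "ennreal 1 \<le> ennreal ((1 / l powr qq) * (\<bar>g x\<bar> powr qq))" by (rule ennreal_leI)
    also have "\<dots> = ennreal (1 / l powr qq) * ennreal (\<bar>g x\<bar> powr qq)"
      by (rule ennreal_mult') simp
    finally show "1 \<le> ennreal (1 / l powr qq) * ennreal (\<bar>g x\<bar> powr qq)" by simp
  qed
  moreover have Sm: "{x\<in>A. 1 \<le> ennreal (1 / l powr qq) * ennreal (\<bar>g x\<bar> powr qq)} \<in> sets lebesgue"
  proof -
    have Pm: "{x\<in>space lebesgue. 1 \<le> ennreal (1 / l powr qq) * ennreal (\<bar>g x\<bar> powr qq)} \<in> sets lebesgue"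
      by measurable
    have sp: "space lebesgue = (UNIV :: 'a set)" by simp
    have "{x\<in>A. 1 \<le> ennreal (1 / l powr qq) * ennreal (\<bar>g x\<bar> powr qq)}
        = A \<inter> {x\<in>space lebesgue. 1 \<le> ennreal (1 / l powr qq) * ennreal (\<bar>g x\<bar> powr qq)}"
      unfolding sp by blast
    then show ?thesis using sets.Int[OF A Pm] by metis
  qed
  ultimately have "emeasure lebesgue (A \<inter> {x. l < \<bar>g x\<bar>}) \<le> emeasure lebesgue {x\<in>A. 1 \<le> ennreal (1 / l powr qq) * ennreal (\<bar>g x\<bar> powr qq)}"
    by (rule emeasure_mono)
  also have "\<dots> \<le> ennreal (1 / l powr qq) * (\<integral>\<^sup>+x. ennreal (\<bar>g x\<bar> powr qq) * indicator A x \<partial>lebesgue)"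
    by (rule nn_integral_Markov_inequality[OF um A])
  finally show ?thesis .
qed

lemma part2_fin_core:
  fixes f :: "'a::euclidean_space \<Rightarrow> real" and s s' p qq ep :: real and k :: int
  assumes f[measurable]: "f \<in> borel_measurable lebesgue"
   and p: "0 < p" and qq: "p < qq"
   and bal: "s - s' = real DIM('a) * (1/p - 1/qq)"
   and ep: "0 \<le> ep"
   and hyp: "\<And>i::nat. ennreal ((2 powr ((s' - s)/2))^i) * (ennreal (2 powr (real_of_int (k + int i) * s)) *
               Lq_norm (ennreal qq) (\<lambda>x. f x * indicator (annulus (k + int i)) x)) \<le> ennreal ep"
  shows "dsamp p DIM('a) (\<lambda>x. norm x powr s' * f x) k \<le> ennreal (max 1 (2 powr (-s')) *
           (1 / (1 - 2 powr (-((s-s')*qq)/2))) powr (1/qq) * (2 powr real DIM('a) - 1) powr (-1/qq) *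
           2 powr (real DIM('a)/p) * ep)"
proof -
  define n where "n = DIM('a)"
  have n: "0 < n" by (simp add: n_def)
  have qq0: "0 < qq" using p qq by simp
  define N where "N = (2::real) powr real n"
  have N: "1 < N" using n by (simp add: N_def)
  define g where "g = (\<lambda>x. norm x powr s' * f x)"
  have g[measurable]: "g \<in> borel_measurable lebesgue" unfolding g_def by (rule g_meas[OF f])
  define \<theta> where "\<theta> = (2::real) powr ((s' - s)/2)"
  have \<theta>: "0 < \<theta>" by (simp add: \<theta>_def)
  have "1/qq < 1/p" using qq p by (simp add: frac_less2)
  then have ss: "0 < s - s'" using n by (simp add: bal n_def)
  define \<gamma> where "\<gamma> = (s - s')*qq"
  have \<gamma>: "0 < \<gamma>" using ss qq0 by (simp add: \<gamma>_def)
  define \<rho>0 where "\<rho>0 = (2::real) powr (-\<gamma>/2)"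
  have \<rho>0: "0 < \<rho>0" "\<rho>0 < 1" using \<gamma> by (auto simp: \<rho>0_def intro!: powr_less_one)
  define Z where "Z = 1/(1-\<rho>0)"
  have Z: "0 < Z" using \<rho>0 by (simp add: Z_def)
  define K2 where "K2 = max 1 ((2::real) powr (-s'))"
  have K2: "0 < K2" by (simp add: K2_def)
  define B where "B i = ep / (\<theta>^i * 2 powr (real_of_int (k + int i) * s))" for i :: nat
  have B: "0 \<le> B i" for i using ep \<theta> by (simp add: B_def)
  define X where "X = K2 powr qq * ep powr qq * 2 powr (-(s-s')*qq*real_of_int k)"
  have X: "0 \<le> X" by (simp add: X_def)
  have intg: "(\<integral>\<^sup>+x. ennreal (\<bar>g x\<bar> powr qq) * indicator (annulus (k + int i)) x \<partial>lebesgue) \<le> ennreal (X * \<rho>0^i)" for i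
  proof -
    let ?j = "k + int i"
    let ?I = "\<integral>\<^sup>+ x. ennreal (\<bar>f x * indicator (annulus ?j) x\<bar> powr qq) \<partial>lebesgue"
    have L: "Lq_norm (ennreal qq) (\<lambda>x. f x * indicator (annulus ?j) x) \<le> ennreal (B i)"
    proof -
      have "ennreal (\<theta>^i * 2 powr (real_of_int ?j * s)) * Lq_norm (ennreal qq) (\<lambda>x. f x * indicator (annulus ?j) x) \<le> ennreal ep"
        using hyp[of i] \<theta> by (simp add: \<theta>_def[symmetric] ennreal_mult mult.assoc)
      moreover have pos: "0 < \<theta>^i * 2 powr (real_of_int ?j * s)" using \<theta> by simp
      ultimately show ?thesis unfolding B_def using ennreal_div_bound[OF pos ep] by blast
    qed
    have I: "?I \<le> ennreal (B i powr qq)"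
    proof -
      have "?I = epow (Lq_norm (ennreal qq) (\<lambda>x. f x * indicator (annulus ?j) x)) qq"
        unfolding Lq_norm_fin[OF qq0] using qq0 by (simp add: epow_inv')
      also have "\<dots> \<le> epow (ennreal (B i)) qq" using qq0 L by (intro epow_mono) auto
      also have "\<dots> = ennreal (B i powr qq)" using B[of i] by (simp add: epow_ennreal)
      finally show ?thesis .
    qed
    have pw: "ennreal (\<bar>g x\<bar> powr qq) * indicator (annulus ?j) x
        \<le> ennreal (K2 powr qq * 2 powr (real_of_int ?j * s' * qq)) * ennreal (\<bar>f x * indicator (annulus ?j) x\<bar> powr qq)" for x
    proof (cases "x \<in> annulus ?j")
      case True
      have nb: "norm x powr s' \<le> K2 * 2 powr (real_of_int ?j * s')"
        using annulus_norm_powr_le[OF True, of s'] by (simp add: K2_def)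
      have "\<bar>g x\<bar> powr qq \<le> (K2 * 2 powr (real_of_int ?j * s') * \<bar>f x\<bar>) powr qq"
        unfolding g_def using qq0 nb by (intro powr_mono2) (auto simp: abs_mult intro: mult_right_mono)
      also have "\<dots> = K2 powr qq * 2 powr (real_of_int ?j * s' * qq) * \<bar>f x\<bar> powr qq"
        using K2 by (simp add: powr_mult powr_powr)
      finally show ?thesis using True K2
        by (simp add: ennreal_mult[symmetric] ennreal_leI)
    qed simp
    have "(\<integral>\<^sup>+x. ennreal (\<bar>g x\<bar> powr qq) * indicator (annulus ?j) x \<partial>lebesgue)
        \<le> (\<integral>\<^sup>+x. ennreal (K2 powr qq * 2 powr (real_of_int ?j * s' * qq)) * ennreal (\<bar>f x * indicator (annulus ?j) x\<bar> powr qq) \<partial>lebesgue)"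
      by (intro nn_integral_mono pw)
    also have "\<dots> = ennreal (K2 powr qq * 2 powr (real_of_int ?j * s' * qq)) * ?I"
      by (rule nn_integral_cmult) measurable
    also have "\<dots> \<le> ennreal (K2 powr qq * 2 powr (real_of_int ?j * s' * qq)) * ennreal (B i powr qq)"
      by (intro mult_left_mono I) simp
    also have "\<dots> = ennreal (K2 powr qq * 2 powr (real_of_int ?j * s' * qq) * B i powr qq)"
      by (rule ennreal_mult'[symmetric]) simp
    also have "K2 powr qq * 2 powr (real_of_int ?j * s' * qq) * B i powr qq = X * \<rho>0^i"
      using J1[OF ep qq0 K2, where kk="real_of_int k" and i=i and s=s and s'=s']
      by (simp add: B_def \<theta>_def X_def \<rho>0_def \<gamma>_def)
    finally show ?thesis .
  qed
  define lam0 where "lam0 = (X * Z / ((N - 1) * 2 powr (real n * real_of_int k))) powr (1/qq)"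
  have lam0: "0 \<le> lam0" by (simp add: lam0_def)
  have dyk: "dy n k = N * 2 powr (real n * real_of_int k)" "dy n (k-1) = 2 powr (real n * real_of_int k)"
    by (simp_all add: dy_def N_def powr_add[symmetric] algebra_simps)
  have lev: "emeasure lebesgue {x. ennreal l < ennreal \<bar>g x\<bar>} \<le> ennreal (dy n k)" if l: "lam0 < l" for l
  proof -
    have l0: "0 < l" using l lam0 by simp
    have set_eq: "{x. ennreal l < ennreal \<bar>g x\<bar>} = {x. l < \<bar>g x\<bar>}"
      using l0 by (auto simp: ennreal_less_iff)
    have "(\<Sum>i. emeasure lebesgue (annulus (k + int i) \<inter> {x. l < \<bar>g x\<bar>}))
        \<le> (\<Sum>i. ennreal (1 / l powr qq) * ennreal (X * \<rho>0^i))"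
    proof (intro suminf_le summableI)
      fix i
      show "emeasure lebesgue (annulus (k + int i) \<inter> {x. l < \<bar>g x\<bar>}) \<le> ennreal (1 / l powr qq) * ennreal (X * \<rho>0^i)"
        by (rule order_trans[OF markov[OF g l0 qq0 annulus_lebesgue]]) (intro mult_left_mono intg, simp)
    qed
    also have "\<dots> = ennreal (1 / l powr qq) * ennreal (X * Z)"
    proof -
      have "(\<lambda>i. X * \<rho>0^i) sums (X * Z)" unfolding Z_def using \<rho>0 by (intro sums_mult geometric_sums) auto
      then have "(\<Sum>i. ennreal (X * \<rho>0^i)) = ennreal (X * Z)" using X \<rho>0 by (intro suminf_ennreal_eq) auto
      then show ?thesis by simp
    qed
    also have "\<dots> = ennreal (X * Z / l powr qq)" by (simp add: ennreal_mult'[symmetric])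
    also have "\<dots> \<le> ennreal (dy n k - dy n (k-1))"
    proof (rule ennreal_leI)
      have "X * Z = lam0 powr qq * ((N - 1) * 2 powr (real n * real_of_int k))"
        unfolding lam0_def using X Z N qq0 by (simp add: powr_powr)
      also have "\<dots> \<le> l powr qq * ((N - 1) * 2 powr (real n * real_of_int k))"
        using N l lam0 qq0 by (intro mult_right_mono powr_mono2) auto
      finally have "X * Z \<le> l powr qq * ((N - 1) * 2 powr (real n * real_of_int k))" .
      then have "X * Z / l powr qq \<le> (N - 1) * 2 powr (real n * real_of_int k)"
        using l0 by (simp add: divide_le_eq mult.commute)
      then show "X * Z / l powr qq \<le> dy n k - dy n (k-1)" unfolding dyk by (simp add: algebra_simps)
    qed
    finally have S: "(\<Sum>i. emeasure lebesgue (annulus (k + int i) \<inter> {x. l < \<bar>g x\<bar>})) \<le> ennreal (dy n k - dy n (k-1))" .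
    have "emeasure lebesgue {x. l < \<bar>g x\<bar>} \<le> ennreal (dy n (k-1)) + ennreal (dy n k - dy n (k-1))"
      using level_cover[OF g, of l k] l0 S unfolding n_def by (meson add_left_mono less_imp_le order_trans)
    also have "\<dots> = ennreal (dy n k)"
      using dy_mono[of "k-1" k n] dy_pos[of n "k-1"] by (simp flip: ennreal_plus)
    finally show ?thesis unfolding set_eq .
  qed
  have G: "rearr g (dy n k) \<le> ennreal lam0" by (rule rearr_upper[OF lam0 lev])
  have "dsamp p n g k \<le> ennreal (dy n k powr (1/p)) * ennreal lam0"
    unfolding dsamp_def by (intro mult_left_mono G) simp
  also have "\<dots> = ennreal (dy n k powr (1/p) * lam0)" by (simp add: ennreal_mult')
  also have "dy n k powr (1/p) * lam0 = K2 * Z powr (1/qq) * (N - 1) powr (-1/qq) * 2 powr (real n/p) * ep"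
  proof -
    have e: "dy n k = 2 powr (real n * (real_of_int k + 1))" by (simp add: dy_def)
    show ?thesis unfolding e lam0_def X_def N_def
      by (rule J3[OF ep qq0 K2 Z _ , where n="real n" and s=s and s'=s' and p=p and kk="real_of_int k"])
         (use N bal in \<open>auto simp: N_def n_def\<close>)
  qed
  finally show ?thesis unfolding g_def n_def K2_def Z_def \<rho>0_def \<gamma>_def N_def by simp
qed

lemma part2_inf_core:
  fixes f :: "'a::euclidean_space \<Rightarrow> real" and s s' p ep :: real and k :: int
  assumes f[measurable]: "f \<in> borel_measurable lebesgue"
   and p: "0 < p"
   and bal: "s - s' = real DIM('a) * (1/p)"
   and ep: "0 \<le> ep"
   and hyp: "\<And>i::nat. ennreal ((2 powr ((s' - s)/2))^i) * (ennreal (2 powr (real_of_int (k + int i) * s)) *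
               Lq_norm \<infinity> (\<lambda>x. f x * indicator (annulus (k + int i)) x)) \<le> ennreal ep"
  shows "dsamp p DIM('a) (\<lambda>x. norm x powr s' * f x) k \<le> ennreal (max 1 (2 powr (-s')) * 2 powr (real DIM('a)/p) * ep)"
proof -
  define n where "n = DIM('a)"
  have n: "0 < n" by (simp add: n_def)
  define g where "g = (\<lambda>x. norm x powr s' * f x)"
  have g[measurable]: "g \<in> borel_measurable lebesgue" unfolding g_def by (rule g_meas[OF f])
  define \<theta> where "\<theta> = (2::real) powr ((s' - s)/2)"
  have \<theta>: "0 < \<theta>" by (simp add: \<theta>_def)
  have ss: "0 < s - s'" using n p by (simp add: bal n_def)
  define K2 where "K2 = max 1 ((2::real) powr (-s'))"
  have K2: "0 < K2" by (simp add: K2_def)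
  define B where "B i = ep / (\<theta>^i * 2 powr (real_of_int (k + int i) * s))" for i :: nat
  have B: "0 \<le> B i" for i using ep \<theta> by (simp add: B_def)
  define lam0 where "lam0 = K2 * ep * 2 powr (-(s-s') * real_of_int k)"
  have lam0: "0 \<le> lam0" using K2 ep by (simp add: lam0_def)
  have zero: "emeasure lebesgue (annulus (k + int i) \<inter> {x. l < \<bar>g x\<bar>}) = 0" if l: "lam0 < l" for l i
  proof -
    let ?j = "k + int i"
    define M where "M = K2 * 2 powr (real_of_int ?j * s')"
    have M: "0 < M" using K2 by (simp add: M_def)
    have L: "Lq_norm \<infinity> (\<lambda>x. f x * indicator (annulus ?j) x) \<le> ennreal (B i)"
    proof -
      have "ennreal (\<theta>^i * 2 powr (real_of_int ?j * s)) * Lq_norm \<infinity> (\<lambda>x. f x * indicator (annulus ?j) x) \<le> ennreal ep"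
        using hyp[of i] \<theta> by (simp add: \<theta>_def[symmetric] ennreal_mult mult.assoc)
      moreover have pos: "0 < \<theta>^i * 2 powr (real_of_int ?j * s)" using \<theta> by simp
      ultimately show ?thesis unfolding B_def using ennreal_div_bound[OF pos ep] by blast
    qed
    have MB: "M * B i \<le> lam0"
    proof -
      have "M * B i = K2 * ep * (2 powr (real_of_int ?j * s') / ((2 powr ((s' - s)/2))^i * 2 powr (real_of_int ?j * s)))"
        by (simp add: M_def B_def \<theta>_def)
      also have "2 powr (real_of_int ?j * s') / ((2 powr ((s' - s)/2))^i * 2 powr (real_of_int ?j * s))
          = 2 powr (real_of_int ?j * s' - ((s' - s)/2 * real i + real_of_int ?j * s))"
        by (simp add: powr_power powr_add powr_diff mult.commute)
      also have "\<dots> \<le> 2 powr (-(s-s') * real_of_int k)"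
      proof (rule powr_mono)
        have e: "real_of_int ?j * s' - ((s' - s)/2 * real i + real_of_int ?j * s) = -(s-s') * real_of_int k - (s - s') * real i / 2"
          by (simp add: field_simps)
        have "0 \<le> (s - s') * real i" using ss by simp
        then show "real_of_int ?j * s' - ((s' - s)/2 * real i + real_of_int ?j * s) \<le> -(s-s') * real_of_int k"
          unfolding e by linarith
      qed simp
      finally show ?thesis unfolding lam0_def using K2 ep
        by (metis (no_types, lifting) mult_left_mono mult_nonneg_nonneg less_imp_le)
    qed
    have "Lq_norm \<infinity> (\<lambda>x. f x * indicator (annulus ?j) x) < ennreal (l / M)"
    proof -
      have "B i < l / M" using MB l M by (simp add: field_simps mult.commute)
      then show ?thesis using L B[of i] by (meson ennreal_lessI le_less_trans order_le_less_trans)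
    qed
    then obtain C where C: "AE x in lebesgue. ennreal \<bar>f x * indicator (annulus ?j) x\<bar> \<le> C" "C < ennreal (l / M)"
      unfolding Lq_norm_def by (auto simp: Inf_less_iff)
    have AEx: "AE x in lebesgue. \<not> (x \<in> annulus ?j \<inter> {x. l < \<bar>g x\<bar>})"
      using C(1)
    proof eventually_elim
      case (elim x)
      show ?case
      proof
        assume x: "x \<in> annulus ?j \<inter> {x. l < \<bar>g x\<bar>}"
        then have "ennreal \<bar>f x\<bar> < ennreal (l / M)" using elim C(2) by simp
        then have fx: "\<bar>f x\<bar> < l / M" by (simp add: ennreal_less_iff)
        have "norm x powr s' \<le> M"
          using annulus_norm_powr_le[of x ?j s'] x by (simp add: M_def K2_def)
        then have "\<bar>g x\<bar> \<le> M * \<bar>f x\<bar>" by (simp add: g_def abs_mult mult_right_mono)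
        also have "\<dots> < l" using fx M by (simp add: field_simps)
        finally show False using x by simp
      qed
    qed
    have meas: "annulus ?j \<inter> {x. l < \<bar>g x\<bar>} \<in> sets lebesgue"
      by (intro sets.Int annulus_lebesgue lebesgue_set_less) measurable
    show ?thesis using AEx by (subst (asm) AE_iff_measurable[OF meas]) auto
  qed
  have lev: "emeasure lebesgue {x. ennreal l < ennreal \<bar>g x\<bar>} \<le> ennreal (dy n k)" if l: "lam0 < l" for l
  proof -
    have l0: "0 < l" using l lam0 by simp
    have set_eq: "{x. ennreal l < ennreal \<bar>g x\<bar>} = {x. l < \<bar>g x\<bar>}"
      using l0 by (auto simp: ennreal_less_iff)
    have "emeasure lebesgue {x. l < \<bar>g x\<bar>} \<le> ennreal (dy n (k-1)) + (\<Sum>i. emeasure lebesgue (annulus (k + int i) \<inter> {x. l < \<bar>g x\<bar>}))"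
      using level_cover[OF g, of l k] l0 unfolding n_def by simp
    also have "\<dots> = ennreal (dy n (k-1))" using zero[OF l] by simp
    also have "\<dots> \<le> ennreal (dy n k)" by (intro ennreal_leI dy_mono) simp
    finally show ?thesis unfolding set_eq .
  qed
  have G: "rearr g (dy n k) \<le> ennreal lam0" by (rule rearr_upper[OF lam0 lev])
  have "dsamp p n g k \<le> ennreal (dy n k powr (1/p)) * ennreal lam0"
    unfolding dsamp_def by (intro mult_left_mono G) simp
  also have "\<dots> = ennreal (dy n k powr (1/p) * lam0)" by (simp add: ennreal_mult')
  also have "dy n k powr (1/p) * lam0 = K2 * 2 powr (real n/p) * ep"
  proof -
    have "dy n k powr (1/p) * 2 powr (-(s-s') * real_of_int k) = 2 powr (real n * (real_of_int k + 1) / p + (-(s-s') * real_of_int k))"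
      by (simp add: dy_def powr_powr powr_add)
    also have "real n * (real_of_int k + 1) / p + (-(s-s') * real_of_int k) = real n / p"
      unfolding bal n_def by (simp add: algebra_simps add_divide_distrib)
    finally have "dy n k powr (1/p) * 2 powr (-(s-s') * real_of_int k) = 2 powr (real n / p)" .
    then show ?thesis unfolding lam0_def by (metis (no_types, lifting) mult.assoc mult.commute)
  qed
  finally show ?thesis unfolding g_def n_def K2_def by simp
qed

lemma hyp_from_core:
  assumes K: "0 < K" and core: "\<And>\<delta>. 0 \<le> \<delta> \<Longrightarrow> (\<forall>i. c i \<le> ennreal \<delta>) \<Longrightarrow> b \<le> ennreal (K * \<delta>)"
  shows "(\<forall>i. c i \<le> D) \<longrightarrow> b \<le> ennreal K * D"
proof
  assume h: "\<forall>i. c i \<le> D"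
  show "b \<le> ennreal K * D"
  proof (cases D rule: ennreal_cases)
    case (real \<delta>)
    then show ?thesis using core[of \<delta>] h K by (simp add: ennreal_mult)
  next
    case top
    then show ?thesis using K by (simp add: ennreal_mult_top)
  qed
qed

lemma bij_shift1: "bij (\<lambda>j::int. j - int i - 1)"
  by (rule bij_betwI[where g="\<lambda>j. j + int i + 1"]) auto

lemma bij_shift2: "bij (\<lambda>j::int. j + int i)"
  by (rule bij_betwI[where g="\<lambda>j. j - int i"]) auto

theorem proposition5p3:
  fixes s s' p :: real and q r :: ennreal
  assumes "0 < p" and "0 < q" and "0 < r"
    and bal: "s / real DIM('a::euclidean_space) + recip q = s' / real DIM('a) + 1 / p"
  shows "(s < s' \<longrightarrow> (\<exists>C>0. \<forall>f::'a \<Rightarrow> real. f \<in> borel_measurable lebesgue \<longrightarrow>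
            herz_norm s q r f \<le> ennreal C * wlorentz_norm p r s' f))
       \<and> (s > s' \<longrightarrow> (\<exists>C>0. \<forall>f::'a \<Rightarrow> real. f \<in> borel_measurable lebesgue \<longrightarrow>
            wlorentz_norm p r s' f \<le> ennreal C * herz_norm s q r f))"
proof -
  define n where "n = DIM('a)"
  have n: "0 < n" by (simp add: n_def)
  have p: "0 < p" by fact
  have r: "0 < r" by fact
  have part1: "\<exists>C>0. \<forall>f::'a \<Rightarrow> real. f \<in> borel_measurable lebesgue \<longrightarrow>
            herz_norm s q r f \<le> ennreal C * wlorentz_norm p r s' f" if ss: "s < s'"
  proof -
    have qfin: "q \<noteq> \<infinity>"
    proof
      assume "q = \<infinity>"
      then have "s / real n = s' / real n + 1 / p" using bal by (simp add: recip_def n_def)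
      moreover have "s / real n < s' / real n" using ss n by (simp add: divide_strict_right_mono)
      ultimately show False using p by (smt (verit) divide_pos_pos)
    qed
    define qq where "qq = enn2real q"
    have qq0: "0 < qq" using qfin \<open>0 < q\<close> by (simp add: qq_def enn2real_positive_iff less_top)
    have qeq: "q = ennreal qq" using qfin by (simp add: qq_def less_top)
    have rq: "recip q = 1 / qq" using qq0 by (simp add: recip_def qeq inverse_ennreal divide_inverse)
    have bal1: "s' - s = real n * (1/qq - 1/p)"
      using bal n unfolding rq n_def[symmetric] by (simp add: field_simps)
    have "0 < real n * (1/qq - 1/p)" using ss bal1 by simp
    then have "1/p < 1/qq" using n by (simp add: zero_less_mult_iff)
    then have qqp: "qq < p" using qq0 p by (simp add: field_simps)
    define \<theta> where "\<theta> = (2::real) powr ((s - s')/2)"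
    have \<theta>: "0 \<le> \<theta>" "\<theta> < 1" using ss by (auto simp: \<theta>_def intro!: powr_less_one)
    define K where "K = max 1 ((2::real) powr s') * (1 / (1 - 2 powr (-(qq*(s'-s))/2))) powr (1/qq) * 2 powr (real n/qq)"
    have "(2::real) powr (-(qq*(s'-s))/2) < 1" using ss qq0 by (intro powr_less_one) (auto simp: mult_pos_pos)
    then have K: "0 < K" unfolding K_def by (intro mult_pos_pos) auto
    obtain C0 where C0: "C0 > 0" "\<forall>b c. (\<forall>j D. (\<forall>i. ennreal (\<theta>^i) * c (j - int i - 1) \<le> D) \<longrightarrow> b j \<le> ennreal K * D)
            \<longrightarrow> Lr r b \<le> ennreal C0 * Lr r c"
      using Lr_conv[OF r \<theta>(1) \<theta>(2) _ , where K=K and \<sigma>="\<lambda>j i. j - int i - 1"] K bij_shift1 by auto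
    obtain C1 where C1: "C1 > 0" "\<forall>g::'a\<Rightarrow>real. Lr r (dsamp p DIM('a) g) \<le> ennreal C1 * lorentz_norm p r g"
      using lorentz_lower[OF p r] by auto
    show ?thesis
    proof (intro exI[of _ "C0 * C1"] conjI allI impI)
      show "0 < C0 * C1" using C0 C1 by simp
      fix f :: "'a \<Rightarrow> real" assume f: "f \<in> borel_measurable lebesgue"
      define b where "b j = ennreal (2 powr (real_of_int j * s)) * Lq_norm q (\<lambda>x. f x * indicator (annulus j) x)" for j
      define c where "c = dsamp p DIM('a) (\<lambda>x. norm x powr s' * f x)"
      have hyp: "\<forall>j D. (\<forall>i. ennreal (\<theta>^i) * c (j - int i - 1) \<le> D) \<longrightarrow> b j \<le> ennreal K * D"
      proof (intro allI)
        fix j D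
        show "(\<forall>i. ennreal (\<theta>^i) * c (j - int i - 1) \<le> D) \<longrightarrow> b j \<le> ennreal K * D"
        proof (rule hyp_from_core[OF K])
          fix \<delta> :: real assume \<delta>: "0 \<le> \<delta>" and h: "\<forall>i. ennreal (\<theta>^i) * c (j - int i - 1) \<le> ennreal \<delta>"
          have "b j \<le> ennreal (max 1 (2 powr s') * (1 / (1 - 2 powr (-(qq*(s'-s))/2))) powr (1/qq) * 2 powr (real DIM('a)/qq) * \<delta>)"
            unfolding b_def qeq
            by (rule part1_core[OF f p qq0 qqp _ \<delta>]) (use bal1 h in \<open>simp_all add: n_def c_def \<theta>_def\<close>)
          then show "b j \<le> ennreal (K * \<delta>)" by (simp add: K_def n_def)
        qed
      qed
      have "herz_norm s q r f = Lr r b" unfolding herz_norm_Lr b_def ..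
      also have "\<dots> \<le> ennreal C0 * Lr r c" using C0(2) hyp by blast
      also have "\<dots> \<le> ennreal C0 * (ennreal C1 * lorentz_norm p r (\<lambda>x. norm x powr s' * f x))"
        unfolding c_def using C1(2) by (intro mult_left_mono) auto
      also have "\<dots> = ennreal (C0 * C1) * wlorentz_norm p r s' f"
        using C0 C1 by (simp add: wlorentz_norm_def ennreal_mult mult.assoc)
      finally show "herz_norm s q r f \<le> ennreal (C0 * C1) * wlorentz_norm p r s' f" .
    qed
  qed
  have part2: "\<exists>C>0. \<forall>f::'a \<Rightarrow> real. f \<in> borel_measurable lebesgue \<longrightarrow>
            wlorentz_norm p r s' f \<le> ennreal C * herz_norm s q r f" if ss: "s' < s"
  proof -
    define \<theta> where "\<theta> = (2::real) powr ((s' - s)/2)"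
    have \<theta>: "0 \<le> \<theta>" "\<theta> < 1" using ss by (auto simp: \<theta>_def intro!: powr_less_one)
    define B where "B f j = ennreal (2 powr (real_of_int j * s)) * Lq_norm q (\<lambda>x. f x * indicator (annulus j) x)"
      for f :: "'a \<Rightarrow> real" and j
    have "\<exists>K>0. \<forall>f k \<delta>. f \<in> borel_measurable lebesgue \<longrightarrow> 0 \<le> \<delta> \<longrightarrow>
            (\<forall>i. ennreal (\<theta>^i) * B f (k + int i) \<le> ennreal \<delta>) \<longrightarrow>
            dsamp p DIM('a) (\<lambda>x. norm x powr s' * f x) k \<le> ennreal (K * \<delta>)"
    proof (cases "q = \<infinity>")
      case True
      have bal2: "s - s' = real DIM('a) * (1/p)"
        using bal n True unfolding n_def[symmetric] by (simp add: recip_def field_simps)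
      show ?thesis
      proof (intro exI[of _ "max 1 (2 powr (-s')) * 2 powr (real DIM('a)/p)"] conjI allI impI)
        show "0 < max 1 (2 powr (-s')) * 2 powr (real DIM('a)/p)" by simp
        fix f :: "'a \<Rightarrow> real" and k \<delta>
        assume f: "f \<in> borel_measurable lebesgue" and \<delta>: "0 \<le> \<delta>" and h: "\<forall>i. ennreal (\<theta>^i) * B f (k + int i) \<le> ennreal \<delta>"
        show "dsamp p DIM('a) (\<lambda>x. norm x powr s' * f x) k \<le> ennreal (max 1 (2 powr (-s')) * 2 powr (real DIM('a)/p) * \<delta>)"
          by (rule part2_inf_core[OF f p bal2 \<delta>]) (use h True in \<open>simp add: B_def \<theta>_def\<close>)
      qed
    next
      case False
      define qq where "qq = enn2real q"
      have qq0: "0 < qq" using False \<open>0 < q\<close> by (simp add: qq_def enn2real_positive_iff less_top)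
      have qeq: "q = ennreal qq" using False by (simp add: qq_def less_top)
      have rq: "recip q = 1 / qq" using qq0 by (simp add: recip_def qeq inverse_ennreal divide_inverse)
      have bal2: "s - s' = real n * (1/p - 1/qq)"
        using bal n unfolding rq n_def[symmetric] by (simp add: field_simps)
      have "0 < real n * (1/p - 1/qq)" using ss bal2 by simp
      then have "1/qq < 1/p" using n by (simp add: zero_less_mult_iff)
      then have qqp: "p < qq" using qq0 p by (simp add: field_simps)
      define K where "K = max 1 (2 powr (-s')) * (1 / (1 - 2 powr (-((s-s')*qq)/2))) powr (1/qq) *
           (2 powr real DIM('a) - 1) powr (-1/qq) * 2 powr (real DIM('a)/p)"
      have "(2::real) powr (-((s-s')*qq)/2) < 1" using ss qq0 by (intro powr_less_one) (auto simp: mult_pos_pos)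
      moreover have "1 < (2::real) powr real DIM('a)" by simp
      ultimately have K: "0 < K" unfolding K_def by (intro mult_pos_pos) auto
      show ?thesis
      proof (intro exI[of _ K] conjI allI impI K)
        fix f :: "'a \<Rightarrow> real" and k \<delta>
        assume f: "f \<in> borel_measurable lebesgue" and \<delta>: "0 \<le> \<delta>" and h: "\<forall>i. ennreal (\<theta>^i) * B f (k + int i) \<le> ennreal \<delta>"
        show "dsamp p DIM('a) (\<lambda>x. norm x powr s' * f x) k \<le> ennreal (K * \<delta>)"
          unfolding K_def
          by (rule part2_fin_core[OF f p qqp _ \<delta>]) (use h bal2 in \<open>simp_all add: B_def \<theta>_def qeq n_def\<close>)
      qed
    qed
    then obtain K where K: "0 < K" and core: "\<forall>f k \<delta>. f \<in> borel_measurable lebesgue \<longrightarrow> 0 \<le> \<delta> \<longrightarrow>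
            (\<forall>i. ennreal (\<theta>^i) * B f (k + int i) \<le> ennreal \<delta>) \<longrightarrow>
            dsamp p DIM('a) (\<lambda>x. norm x powr s' * f x) k \<le> ennreal (K * \<delta>)" by blast
    obtain C0 where C0: "C0 > 0" "\<forall>b c. (\<forall>j D. (\<forall>i. ennreal (\<theta>^i) * c (j + int i) \<le> D) \<longrightarrow> b j \<le> ennreal K * D)
            \<longrightarrow> Lr r b \<le> ennreal C0 * Lr r c"
      using Lr_conv[OF r \<theta>(1) \<theta>(2) _ , where K=K and \<sigma>="\<lambda>j i. j + int i"] K bij_shift2 by auto
    obtain C1 where C1: "C1 > 0" "\<forall>g::'a\<Rightarrow>real. lorentz_norm p r g \<le> ennreal C1 * Lr r (dsamp p DIM('a) g)"
      using lorentz_upper[OF p r] by auto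
    show ?thesis
    proof (intro exI[of _ "C1 * C0"] conjI allI impI)
      show "0 < C1 * C0" using C0 C1 by simp
      fix f :: "'a \<Rightarrow> real" assume f: "f \<in> borel_measurable lebesgue"
      define c where "c = dsamp p DIM('a) (\<lambda>x. norm x powr s' * f x)"
      have hyp: "\<forall>j D. (\<forall>i. ennreal (\<theta>^i) * B f (j + int i) \<le> D) \<longrightarrow> c j \<le> ennreal K * D"
      proof (intro allI)
        fix j D
        show "(\<forall>i. ennreal (\<theta>^i) * B f (j + int i) \<le> D) \<longrightarrow> c j \<le> ennreal K * D"
        proof (rule hyp_from_core[OF K])
          fix \<delta> :: real assume \<delta>: "0 \<le> \<delta>" and h: "\<forall>i. ennreal (\<theta>^i) * B f (j + int i) \<le> ennreal \<delta>"
          show "c j \<le> ennreal (K * \<delta>)" unfolding c_def using core f \<delta> h by blast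
        qed
      qed
      have "wlorentz_norm p r s' f \<le> ennreal C1 * Lr r c"
        unfolding wlorentz_norm_def c_def using C1(2) by blast
      also have "\<dots> \<le> ennreal C1 * (ennreal C0 * Lr r (B f))"
        using C0(2) hyp by (intro mult_left_mono) auto
      also have "Lr r (B f) = herz_norm s q r f" unfolding herz_norm_Lr B_def ..
      also have "ennreal C1 * (ennreal C0 * herz_norm s q r f) = ennreal (C1 * C0) * herz_norm s q r f"
        using C0 C1 by (simp add: ennreal_mult mult.assoc)
      finally show "wlorentz_norm p r s' f \<le> ennreal (C1 * C0) * herz_norm s q r f" .
    qed
  qed
  show ?thesis using part1 part2 by blast
qed

end
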